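(* Let $A\in\mathbb R^{m\times n}$ and $p\in\mathbb Q\cap(2,\infty)$. Then $\|A\|_{p_*}=\max\{\langle A,Z\rangle:\|Z\|_{p_\sigma}\le1\}$ and $\|A\|_{p_u}:=\max\{\langle A,Z\rangle:\|Z\|_{p_v}\le1\}$ satisfy $\|A\|_{p_u}\le\|A\|_{p_*}\le\delta_G\|A\|_{p_u}$.
   Context: Matrix spectral $p$-norm $\|Z\|_{p_\sigma}=\max\{\boldsymbol x^{\mathrm T}Z\boldsymbol y:\|\boldsymbol x\|_p=\|\boldsymbol y\|_p=1\}$; matrix nuclear $p$-norm $\|A\|_{p_*}=\min\{\sum|\lambda_i|:A=\sum\lambda_i\boldsymbol x_i\boldsymbol y_i^{\mathrm T},\ \|\boldsymbol x_i\|_p=\|\boldsymbol y_i\|_p=1\}$. $\|Z\|_{p_v}=\max\{\langle\begin{pmatrix}O&Z/2\\Z^{\mathrm T}/2&O\end{pmatrix},X\rangle:\sum_{i\le m}|x_{ii}|^{p/2}\le1,\ \sum_{i>m}|x_{ii}|^{p/2}\le1,\ X\succeq O\}$. $\delta_G$ is the real Grothendieck constant. *)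

theory Defs
  imports "HOL-Analysis.Analysis"
begin

text \<open>Vectors in R^k are functions nat => real (only indices < k matter);
  m x n matrices are functions nat => nat => real (only indices i < m, j < n matter).\<close>

definition vec_pnorm :: "real \<Rightarrow> nat \<Rightarrow> (nat \<Rightarrow> real) \<Rightarrow> real" where
  "vec_pnorm p k x = (\<Sum>i<k. \<bar>x i\<bar> powr p) powr (1 / p)"

definition mat_inner :: "nat \<Rightarrow> nat \<Rightarrow> (nat \<Rightarrow> nat \<Rightarrow> real) \<Rightarrow> (nat \<Rightarrow> nat \<Rightarrow> real) \<Rightarrow> real" where
  "mat_inner m n A Z = (\<Sum>i<m. \<Sum>j<n. A i j * Z i j)"

definition spectral_pnorm :: "real \<Rightarrow> nat \<Rightarrow> nat \<Rightarrow> (nat \<Rightarrow> nat \<Rightarrow> real) \<Rightarrow> real" where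
  "spectral_pnorm p m n Z = Sup {(\<Sum>i<m. \<Sum>j<n. x i * Z i j * y j) | x y.
       vec_pnorm p m x = 1 \<and> vec_pnorm p n y = 1}"

definition nuclear_pnorm :: "real \<Rightarrow> nat \<Rightarrow> nat \<Rightarrow> (nat \<Rightarrow> nat \<Rightarrow> real) \<Rightarrow> real" where
  "nuclear_pnorm p m n A = Inf {(\<Sum>k<r. \<bar>lam k\<bar>) | (r::nat) lam xs ys.
       (\<forall>k<r. vec_pnorm p m (xs k) = 1 \<and> vec_pnorm p n (ys k) = 1) \<and>
       (\<forall>i<m. \<forall>j<n. A i j = (\<Sum>k<r. lam k * xs k i * ys k j))}"

definition psd :: "nat \<Rightarrow> (nat \<Rightarrow> nat \<Rightarrow> real) \<Rightarrow> bool" where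
  "psd N X \<longleftrightarrow> (\<forall>i<N. \<forall>j<N. X i j = X j i) \<and>
     (\<forall>x. (\<Sum>i<N. \<Sum>j<N. x i * X i j * x j) \<ge> 0)"

text \<open>The norm \<open>\<parallel>Z\<parallel>_{p_v}\<close>: X is (m+n) x (m+n), indices < m form the first block,
  indices m..m+n-1 the second; the inner product with the block matrix
  [[O, Z/2],[Z^T/2, O]] is written out literally.\<close>
definition pv_norm :: "real \<Rightarrow> nat \<Rightarrow> nat \<Rightarrow> (nat \<Rightarrow> nat \<Rightarrow> real) \<Rightarrow> real" where
  "pv_norm p m n Z = Sup {(\<Sum>i<m. \<Sum>j<n. Z i j / 2 * X i (m + j))
                         + (\<Sum>j<n. \<Sum>i<m. Z i j / 2 * X (m + j) i) | X.
       psd (m + n) X \<and>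
       (\<Sum>i<m. \<bar>X i i\<bar> powr (p / 2)) \<le> 1 \<and>
       (\<Sum>j<n. \<bar>X (m + j) (m + j)\<bar> powr (p / 2)) \<le> 1}"

definition pu_norm :: "real \<Rightarrow> nat \<Rightarrow> nat \<Rightarrow> (nat \<Rightarrow> nat \<Rightarrow> real) \<Rightarrow> real" where
  "pu_norm p m n A = Sup {mat_inner m n A Z | Z. pv_norm p m n Z \<le> 1}"

definition grothendieck_const :: real where
  "grothendieck_const = Inf {K. \<forall>(m::nat) (n::nat) (d::nat) (a::nat \<Rightarrow> nat \<Rightarrow> real)
        (u::nat \<Rightarrow> nat \<Rightarrow> real) (v::nat \<Rightarrow> nat \<Rightarrow> real).
      (\<forall>i<m. (\<Sum>k<d. (u i k)\<^sup>2) = 1) \<and> (\<forall>j<n. (\<Sum>k<d. (v j k)\<^sup>2) = 1) \<longrightarrow>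
      (\<Sum>i<m. \<Sum>j<n. a i j * (\<Sum>k<d. u i k * v j k))
        \<le> K * Sup {(\<Sum>i<m. \<Sum>j<n. a i j * e i * f j) | e f.
                    (\<forall>i<m. e i \<in> {-1, 1}) \<and> (\<forall>j<n. f j \<in> {-1, 1})}}"

end

theory Submission
  imports Defs "HOL-Library.Function_Algebras"
begin
instantiation "fun" :: (type, real_vector) real_vector
begin
definition scaleR_fun :: "real \<Rightarrow> ('a \<Rightarrow> 'b) \<Rightarrow> 'a \<Rightarrow> 'b" where
  "scaleR_fun r f = (\<lambda>x. r *\<^sub>R f x)"
instance by standard (auto simp: scaleR_fun_def fun_eq_iff algebra_simps)
end

lemma scaleR_fun_apply[simp]: "(r *\<^sub>R f) x = r *\<^sub>R f x"
  by (simp add: scaleR_fun_def)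

definition linon :: "'v::real_vector set \<Rightarrow> ('v \<Rightarrow> real) \<Rightarrow> bool" where
  "linon W g \<longleftrightarrow> (\<forall>x\<in>W. \<forall>y\<in>W. g (x + y) = g x + g y) \<and> (\<forall>x\<in>W. \<forall>c. g (c *\<^sub>R x) = c * g x)"

lemma hb_step:
  fixes N :: "'v::real_vector \<Rightarrow> real"
  assumes sub: "\<And>x y. N (x + y) \<le> N x + N y"
    and hom: "\<And>c x. c > 0 \<Longrightarrow> N (c *\<^sub>R x) = c * N x"
    and W: "subspace W" and lin: "linon W g" and le: "\<And>x. x \<in> W \<Longrightarrow> g x \<le> N x"
  shows "\<exists>h. (\<forall>x\<in>W. h x = g x) \<and> linon (span (insert e W)) h
            \<and> (\<forall>x\<in>span (insert e W). h x \<le> N x)"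
proof (cases "e \<in> W")
  case True
  then have "span (insert e W) = W"
    using W by (simp add: span_eq_iff insert_absorb)
  then show ?thesis using lin le by auto
next
  case False
  have g0: "g 0 = 0" using lin W unfolding linon_def
    by (metis mult_zero_left scaleR_zero_left subspace_0)
  have gadd: "g (x + y) = g x + g y" if "x \<in> W" "y \<in> W" for x y using lin that unfolding linon_def by blast
  have gsc: "g (c *\<^sub>R x) = c * g x" if "x \<in> W" for x c using lin that unfolding linon_def by blast
  define S where "S = {g w - N (w - e) | w. w \<in> W}"
  have key: "g w1 - N (w1 - e) \<le> N (w2 + e) - g w2" if "w1 \<in> W" "w2 \<in> W" for w1 w2
  proof -
    have "g w1 + g w2 = g (w1 + w2)" using gadd that by simp
    also have "\<dots> \<le> N (w1 + w2)" using le that W by (simp add: subspace_add)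
    also have "\<dots> = N ((w1 - e) + (w2 + e))" by (simp add: algebra_simps)
    also have "\<dots> \<le> N (w1 - e) + N (w2 + e)" by (rule sub)
    finally show ?thesis by simp
  qed
  have Sne: "S \<noteq> {}" using W S_def subspace_0 by blast
  have Sbdd: "bdd_above S" unfolding S_def bdd_above_def
    using key W subspace_0 by blast
  define c where "c = Sup S"
  have c1: "g w - N (w - e) \<le> c" if "w \<in> W" for w
    unfolding c_def by (rule cSup_upper) (use that Sbdd S_def in auto)
  have c2: "c \<le> N (w + e) - g w" if "w \<in> W" for w
    unfolding c_def by (rule cSup_least) (use Sne key that S_def in auto)
  have spanW: "span (insert e W) = {w + t *\<^sub>R e | w t. w \<in> W}"
  proof -
    have "span W = W" using W by (simp add: span_eq_iff)
    show ?thesis unfolding span_insert \<open>span W = W\<close>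
    proof (intro set_eqI iffI)
      fix x assume "x \<in> {x. \<exists>k. x - k *\<^sub>R e \<in> W}"
      then obtain k where "x - k *\<^sub>R e \<in> W" by blast
      then show "x \<in> {w + t *\<^sub>R e |w t. w \<in> W}"
        by (intro CollectI exI[of _ "x - k *\<^sub>R e"] exI[of _ k]) simp
    next
      fix x assume "x \<in> {w + t *\<^sub>R e |w t. w \<in> W}"
      then obtain w t where "w \<in> W" "x = w + t *\<^sub>R e" by blast
      then show "x \<in> {x. \<exists>k. x - k *\<^sub>R e \<in> W}" by (intro CollectI exI[of _ t]) simp
    qed
  qed
  have uniq: "w1 = w2 \<and> t1 = t2" if "w1 \<in> W" "w2 \<in> W" "w1 + t1 *\<^sub>R e = w2 + t2 *\<^sub>R e" for w1 w2 t1 t2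
  proof (cases "t1 = t2")
    case True then show ?thesis using that by simp
  next
    case False
    have "(t1 - t2) *\<^sub>R e = w2 - w1" using that by (simp add: algebra_simps)
    then have "(1 / (t1 - t2)) *\<^sub>R ((t1 - t2) *\<^sub>R e) = (1 / (t1 - t2)) *\<^sub>R (w2 - w1)" by simp
    then have "e = (1 / (t1 - t2)) *\<^sub>R (w2 - w1)" using False by simp
    then have "e \<in> W" using W that by (simp add: subspace_diff subspace_scale)
    then show ?thesis using \<open>e \<notin> W\<close> by blast
  qed
  define h where "h v = (THE r. \<exists>w t. w \<in> W \<and> v = w + t *\<^sub>R e \<and> r = g w + t * c)" for v
  have hval: "h (w + t *\<^sub>R e) = g w + t * c" if "w \<in> W" for w t
    unfolding h_def
    by (rule the_equality) (use that uniq in \<open>blast, metis\<close>)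
  show ?thesis
  proof (intro exI conjI ballI)
    fix x assume "x \<in> W"
    then show "h x = g x" using hval[of x 0] by simp
  next
    show "linon (span (insert e W)) h" unfolding linon_def spanW
    proof (intro conjI ballI allI)
      fix x y assume "x \<in> {w + t *\<^sub>R e |w t. w \<in> W}" "y \<in> {w + t *\<^sub>R e |w t. w \<in> W}"
      then obtain w1 t1 w2 t2 where "w1 \<in> W" "w2 \<in> W" "x = w1 + t1 *\<^sub>R e" "y = w2 + t2 *\<^sub>R e" by blast
      note * = this
      have eq: "x + y = (w1 + w2) + (t1 + t2) *\<^sub>R e" using * by (simp add: algebra_simps)
      have "h (x + y) = g (w1 + w2) + (t1 + t2) * c" unfolding eq
        by (rule hval) (use W * in \<open>simp add: subspace_add\<close>)
      then show "h (x + y) = h x + h y" using hval gadd * by (simp add: distrib_right)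
    next
      fix x c' assume "x \<in> {w + t *\<^sub>R e |w t. w \<in> W}"
      then obtain w1 t1 where "w1 \<in> W" "x = w1 + t1 *\<^sub>R e" by blast
      note * = this
      have eq: "c' *\<^sub>R x = (c' *\<^sub>R w1) + (c' * t1) *\<^sub>R e" using * by (simp add: algebra_simps)
      have "h (c' *\<^sub>R x) = g (c' *\<^sub>R w1) + (c' * t1) * c" unfolding eq
        by (rule hval) (use W * in \<open>simp add: subspace_scale\<close>)
      then show "h (c' *\<^sub>R x) = c' * h x" using hval gsc * by (simp add: distrib_left)
    qed
  next
    fix x assume "x \<in> span (insert e W)"
    then obtain w t where w: "w \<in> W" and x: "x = w + t *\<^sub>R e" using spanW by blast
    have "g w + t * c \<le> N (w + t *\<^sub>R e)"
    proof (cases "t > 0")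
      case True
      have "c \<le> N ((1/t) *\<^sub>R w + e) - g ((1/t) *\<^sub>R w)" using c2 W w by (simp add: subspace_scale)
      then have "t * c \<le> t * (N ((1/t) *\<^sub>R w + e) - g ((1/t) *\<^sub>R w))" using True by simp
      also have "\<dots> = N (t *\<^sub>R ((1/t) *\<^sub>R w + e)) - g w" using True hom gsc w by (simp add: right_diff_distrib)
      also have "t *\<^sub>R ((1/t) *\<^sub>R w + e) = w + t *\<^sub>R e" using True by (simp add: algebra_simps)
      finally show ?thesis by simp
    next
      case False
      show ?thesis
      proof (cases "t = 0")
        case True then show ?thesis using le w by simp
      next
        case False
        define s where "s = - t"
        have s: "s > 0" using False \<open>\<not> t > 0\<close> s_def by simp
        have "g ((1/s) *\<^sub>R w) - N ((1/s) *\<^sub>R w - e) \<le> c" using c1 W w by (simp add: subspace_scale)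
        then have "s * (g ((1/s) *\<^sub>R w) - N ((1/s) *\<^sub>R w - e)) \<le> s * c" using s by simp
        moreover have "s * (g ((1/s) *\<^sub>R w) - N ((1/s) *\<^sub>R w - e)) = g w - N (s *\<^sub>R ((1/s) *\<^sub>R w - e))"
          using s hom gsc w by (simp add: right_diff_distrib)
        moreover have "s *\<^sub>R ((1/s) *\<^sub>R w - e) = w + t *\<^sub>R e" using s s_def by (simp add: algebra_simps)
        ultimately show ?thesis using s_def by simp
      qed
    qed
    then show "h x \<le> N x" using hval w x by simp
  qed
qed

lemma hb_finite:
  fixes N :: "'v::real_vector \<Rightarrow> real"
  assumes sub: "\<And>x y. N (x + y) \<le> N x + N y"
    and hom: "\<And>c x. c > 0 \<Longrightarrow> N (c *\<^sub>R x) = c * N x"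
    and nn: "\<And>x. N x \<ge> 0"
    and fin: "finite B"
  shows "\<exists>g. linon (span (insert A B)) g \<and> (\<forall>x\<in>span (insert A B). g x \<le> N x) \<and> g A = N A"
  using fin
proof (induction B rule: finite_induct)
  case empty
  have N0: "N 0 = 0" using hom[of 2 0] by simp
  show ?case
  proof (cases "A = 0")
    case True
    then show ?thesis by (intro exI[of _ "\<lambda>_. 0"]) (auto simp: linon_def N0 nn)
  next
    case False
    define g where "g x = (THE t. x = t *\<^sub>R A) * N A" for x
    have gval: "g (t *\<^sub>R A) = t * N A" for t
      unfolding g_def by (subst the_equality[of _ t]) (use False in auto)
    have sp: "span (insert A {}) = {t *\<^sub>R A | t. True}" by (auto simp: span_singleton)
    show ?thesis
    proof (intro exI conjI ballI)
      show "linon (span (insert A {})) g" unfolding linon_def sp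
        by (auto simp: gval scaleR_add_left[symmetric] distrib_right simp del: scaleR_add_left)
      show "g A = N A" using gval[of 1] by simp
      fix x assume "x \<in> span (insert A {})"
      then obtain t where x: "x = t *\<^sub>R A" using sp by blast
      show "g x \<le> N x"
      proof (cases "t \<ge> 0")
        case True
        then show ?thesis using x gval[of t] hom[of t A] N0
          by (cases "t = 0") auto
      next
        case False
        then have "g x \<le> 0" using x gval nn[of A] by (simp add: mult_nonpos_nonneg)
        then show ?thesis using nn[of x] by linarith
      qed
    qed
  qed
next
  case (insert b B)
  then obtain g where g: "linon (span (insert A B)) g" "\<forall>x\<in>span (insert A B). g x \<le> N x" "g A = N A"
    by blast
  have W: "subspace (span (insert A B))" by simp
  obtain h where h: "\<forall>x\<in>span (insert A B). h x = g x" "linon (span (insert b (span (insert A B)))) h"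
    "\<forall>x\<in>span (insert b (span (insert A B))). h x \<le> N x"
    using hb_step[OF sub hom W g(1)] g(2) by blast
  have eq: "span (insert b (span (insert A B))) = span (insert A (insert b B))"
    by (simp add: span_insert[of b] insert_commute[of A b] span_span)
  have "A \<in> span (insert A B)" by (simp add: span_base)
  then show ?case using h g(3) eq by auto
qed

lemma sum_split_add: "(\<Sum>k<a+b. f k) = (\<Sum>k<a. f k) + (\<Sum>k<b. (f (a + k)::real))" for a b :: nat
  by (induction b) (simp_all add: add.assoc)

lemma vp_sum1:
  assumes "vec_pnorm p k x = 1" "p > 0"
  shows "(\<Sum>i<k. \<bar>x i\<bar> powr p) = 1"
proof -
  let ?S = "(\<Sum>i<k. \<bar>x i\<bar> powr p)"
  have S0: "?S \<ge> 0" by (simp add: sum_nonneg)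
  have "?S powr (1/p) = 1" using assms unfolding vec_pnorm_def by simp
  then have "(?S powr (1/p)) powr p = 1" by simp
  then show ?thesis using S0 assms by (simp add: powr_powr)
qed

lemma vp_le1:
  assumes "vec_pnorm p k x = 1" "p > 0" "i < k"
  shows "\<bar>x i\<bar> \<le> 1"
proof -
  have "\<bar>x i\<bar> powr p \<le> (\<Sum>i<k. \<bar>x i\<bar> powr p)"
    using assms(3) by (intro member_le_sum) auto
  then have le: "\<bar>x i\<bar> powr p \<le> 1" using vp_sum1[OF assms(1,2)] by simp
  show ?thesis
  proof (rule ccontr)
    assume "\<not> \<bar>x i\<bar> \<le> 1"
    then have "1 powr p < \<bar>x i\<bar> powr p" using assms(2) by (intro powr_less_mono2) auto
    then show False using le by simp
  qed
qed

lemma vp_neg[simp]: "vec_pnorm p k (\<lambda>i. - x i) = vec_pnorm p k x"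
  by (simp add: vec_pnorm_def)

lemma vp_unitvec:
  assumes "a < k"
  shows "vec_pnorm p k (\<lambda>i. if i = a then 1 else 0) = 1"
proof -
  have "(\<Sum>i<k. \<bar>if i = a then 1 else 0::real\<bar> powr p) = (\<Sum>i<k. if i = a then 1 else 0)"
    by (intro sum.cong) auto
  also have "\<dots> = 1" using assms by simp
  finally show ?thesis unfolding vec_pnorm_def by simp
qed

definition dec :: "real \<Rightarrow> nat \<Rightarrow> nat \<Rightarrow> (nat \<Rightarrow> nat \<Rightarrow> real) \<Rightarrow> nat \<Rightarrow> (nat \<Rightarrow> real)
   \<Rightarrow> (nat \<Rightarrow> nat \<Rightarrow> real) \<Rightarrow> (nat \<Rightarrow> nat \<Rightarrow> real) \<Rightarrow> bool" where
  "dec p m n A r lam xs ys \<longleftrightarrow> (\<forall>k<r. vec_pnorm p m (xs k) = 1 \<and> vec_pnorm p n (ys k) = 1) \<and>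
       (\<forall>i<m. \<forall>j<n. A i j = (\<Sum>k<r. lam k * xs k i * ys k j))"

definition nset where
  "nset p m n A = {(\<Sum>k<r. \<bar>lam k\<bar>) | r lam xs ys. dec p m n A r lam xs ys}"

lemma nuclear_nset: "nuclear_pnorm p m n A = Inf (nset p m n A)"
  unfolding nuclear_pnorm_def nset_def dec_def by simp

lemma nset_nonneg: "v \<in> nset p m n A \<Longrightarrow> v \<ge> 0"
  unfolding nset_def by (auto intro: sum_nonneg)

lemma nset_bdd: "bdd_below (nset p m n A)"
  using nset_nonneg by (meson bdd_below.I)

lemma dec_exists:
  assumes "0 < n"
  shows "dec p m n A (m * n) (\<lambda>k. A (k div n) (k mod n)) (\<lambda>k i. if i = k div n then 1 else 0)
           (\<lambda>k j. if j = k mod n then 1 else 0)"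
  unfolding dec_def
proof (intro conjI allI impI)
  fix k assume k: "k < m * n"
  then have "k div n < m" by (simp add: less_mult_imp_div_less)
  then show "vec_pnorm p m (\<lambda>i. if i = k div n then 1 else 0) = 1" by (rule vp_unitvec)
  show "vec_pnorm p n (\<lambda>j. if j = k mod n then 1 else 0) = 1" using assms by (intro vp_unitvec) simp
next
  fix i j assume ij: "i < m" "j < n"
  have eq: "(k div n = i \<and> k mod n = j) \<longleftrightarrow> k = i * n + j" for k
  proof
    assume "k div n = i \<and> k mod n = j"
    then show "k = i * n + j" by (metis div_mult_mod_eq)
  next
    assume "k = i * n + j"
    then show "k div n = i \<and> k mod n = j" using ij by simp
  qed
  have "(\<Sum>k<m * n. A (k div n) (k mod n) * (if i = k div n then 1 else 0) * (if j = k mod n then 1 else 0))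
      = (\<Sum>k<m * n. if k = i * n + j then A i j else 0)"
  proof (intro sum.cong refl)
    fix k assume "k \<in> {..<m * n}"
    show "A (k div n) (k mod n) * (if i = k div n then 1 else 0) * (if j = k mod n then 1 else 0)
        = (if k = i * n + j then A i j else 0)"
    proof (cases "k div n = i \<and> k mod n = j")
      case True
      then show ?thesis using eq[of k] by auto
    next
      case False
      then show ?thesis using eq[of k] by auto
    qed
  qed
  also have "\<dots> = A i j"
  proof -
    have "(i + 1) * n \<le> m * n" using ij by (intro mult_right_mono) auto
    then have "i * n + j < m * n" using ij by simp
    then show ?thesis by simp
  qed
  finally show "A i j = (\<Sum>k<m * n. A (k div n) (k mod n) * (if i = k div n then 1 else 0) *
      (if j = k mod n then 1 else 0))" by simp
qed

lemma nset_ne: "0 < n \<Longrightarrow> nset p m n A \<noteq> {}"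
  unfolding nset_def using dec_exists by blast

lemma nuc_nonneg: "0 < n \<Longrightarrow> nuclear_pnorm p m n A \<ge> 0"
  unfolding nuclear_nset by (rule cInf_greatest) (auto simp: nset_ne nset_nonneg)

lemma nuc_le: "dec p m n A r lam xs ys \<Longrightarrow> nuclear_pnorm p m n A \<le> (\<Sum>k<r. \<bar>lam k\<bar>)"
  unfolding nuclear_nset by (rule cInf_lower) (auto simp: nset_def nset_bdd)

lemma dec_add:
  assumes "dec p m n A r1 l1 x1 y1" "dec p m n B r2 l2 x2 y2"
  shows "dec p m n (A + B) (r1 + r2) (\<lambda>k. if k < r1 then l1 k else l2 (k - r1))
          (\<lambda>k. if k < r1 then x1 k else x2 (k - r1)) (\<lambda>k. if k < r1 then y1 k else y2 (k - r1))"
  unfolding dec_def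
proof (intro conjI allI impI)
  fix k assume k: "k < r1 + r2"
  show "vec_pnorm p m (if k < r1 then x1 k else x2 (k - r1)) = 1"
    using assms k unfolding dec_def by (cases "k < r1") auto
  show "vec_pnorm p n (if k < r1 then y1 k else y2 (k - r1)) = 1"
    using assms k unfolding dec_def by (cases "k < r1") auto
next
  fix i j assume ij: "i < m" "j < n"
  show "(A + B) i j = (\<Sum>k<r1 + r2. (if k < r1 then l1 k else l2 (k - r1)) *
      (if k < r1 then x1 k else x2 (k - r1)) i * (if k < r1 then y1 k else y2 (k - r1)) j)"
    using assms ij unfolding dec_def by (simp add: sum_split_add)
qed

lemma dec_scale:
  assumes "dec p m n A r l x y"
  shows "dec p m n (c *\<^sub>R A) r (\<lambda>k. c * l k) x y"
  using assms unfolding dec_def by (auto simp: sum_distrib_left mult.assoc)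

lemma nuc_add:
  assumes "0 < n"
  shows "nuclear_pnorm p m n (A + B) \<le> nuclear_pnorm p m n A + nuclear_pnorm p m n B"
proof -
  have "nuclear_pnorm p m n (A + B) - b \<le> nuclear_pnorm p m n A" if "b \<in> nset p m n B" for b
  proof -
    have "nuclear_pnorm p m n (A + B) - b \<le> a" if "a \<in> nset p m n A" for a
    proof -
      obtain r1 l1 x1 y1 where d1: "dec p m n A r1 l1 x1 y1" "a = (\<Sum>k<r1. \<bar>l1 k\<bar>)"
        using \<open>a \<in> nset p m n A\<close> unfolding nset_def by blast
      obtain r2 l2 x2 y2 where d2: "dec p m n B r2 l2 x2 y2" "b = (\<Sum>k<r2. \<bar>l2 k\<bar>)"
        using \<open>b \<in> nset p m n B\<close> unfolding nset_def by blast
      have "nuclear_pnorm p m n (A + B) \<le> (\<Sum>k<r1+r2. \<bar>if k < r1 then l1 k else l2 (k - r1)\<bar>)"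
        by (rule nuc_le[OF dec_add[OF d1(1) d2(1)]])
      also have "\<dots> = a + b" using d1 d2 by (simp add: sum_split_add)
      finally show ?thesis by simp
    qed
    then show ?thesis unfolding nuclear_nset[of p m n A]
      by (intro cInf_greatest) (auto simp: nset_ne assms)
  qed
  then have "nuclear_pnorm p m n (A + B) - nuclear_pnorm p m n A \<le> b" if "b \<in> nset p m n B" for b
    using that by force
  then have "nuclear_pnorm p m n (A + B) - nuclear_pnorm p m n A \<le> nuclear_pnorm p m n B"
    unfolding nuclear_nset[of p m n B] by (intro cInf_greatest) (auto simp: nset_ne assms)
  then show ?thesis by simp
qed

lemma nuc_scale_le:
  assumes "0 < n" "c > 0"
  shows "nuclear_pnorm p m n (c *\<^sub>R A) \<le> c * nuclear_pnorm p m n A"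
proof -
  have "nuclear_pnorm p m n (c *\<^sub>R A) / c \<le> a" if a: "a \<in> nset p m n A" for a
  proof -
    obtain r l x y where d: "dec p m n A r l x y" "a = (\<Sum>k<r. \<bar>l k\<bar>)"
      using a unfolding nset_def by blast
    have "nuclear_pnorm p m n (c *\<^sub>R A) \<le> (\<Sum>k<r. \<bar>c * l k\<bar>)" by (rule nuc_le[OF dec_scale[OF d(1)]])
    also have "\<dots> = c * a" using d assms by (simp add: abs_mult sum_distrib_left)
    finally show ?thesis using assms by (simp add: divide_le_eq mult.commute)
  qed
  then have "nuclear_pnorm p m n (c *\<^sub>R A) / c \<le> nuclear_pnorm p m n A"
    unfolding nuclear_nset[of p m n A] by (intro cInf_greatest) (auto simp: nset_ne assms)
  then show ?thesis using assms by (simp add: divide_le_eq mult.commute)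
qed

lemma nuc_scale:
  assumes "0 < n" "c > 0"
  shows "nuclear_pnorm p m n (c *\<^sub>R A) = c * nuclear_pnorm p m n A"
proof -
  have "nuclear_pnorm p m n A = nuclear_pnorm p m n ((1/c) *\<^sub>R (c *\<^sub>R A))" using assms by simp
  also have "\<dots> \<le> (1/c) * nuclear_pnorm p m n (c *\<^sub>R A)" using assms by (intro nuc_scale_le) auto
  finally have "c * nuclear_pnorm p m n A \<le> nuclear_pnorm p m n (c *\<^sub>R A)" using assms
    by (simp add: field_simps)
  then show ?thesis using nuc_scale_le[OF assms, of p m A] by simp
qed

lemma nuc_rank1:
  assumes "vec_pnorm p m x = 1" "vec_pnorm p n y = 1"
  shows "nuclear_pnorm p m n (\<lambda>i j. x i * y j) \<le> 1"
proof -
  have "dec p m n (\<lambda>i j. x i * y j) 1 (\<lambda>_. 1) (\<lambda>_. x) (\<lambda>_. y)" using assms unfolding dec_def by simp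
  from nuc_le[OF this] show ?thesis by simp
qed

lemma nuc_blockzero:
  assumes "\<forall>i<m. \<forall>j<n. A i j = 0"
  shows "nuclear_pnorm p m n A \<le> 0"
proof -
  have "dec p m n A 0 (\<lambda>_. 0) (\<lambda>_. x) (\<lambda>_. y)" for x y using assms unfolding dec_def by simp
  from nuc_le[OF this] show ?thesis by simp
qed

definition bil :: "nat \<Rightarrow> nat \<Rightarrow> (nat \<Rightarrow> real) \<Rightarrow> (nat \<Rightarrow> nat \<Rightarrow> real) \<Rightarrow> (nat \<Rightarrow> real) \<Rightarrow> real" where
  "bil m n x Z y = (\<Sum>i<m. \<Sum>j<n. x i * Z i j * y j)"

definition sset where
  "sset p m n Z = {bil m n x Z y | x y. vec_pnorm p m x = 1 \<and> vec_pnorm p n y = 1}"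

lemma spectral_sset: "spectral_pnorm p m n Z = Sup (sset p m n Z)"
  unfolding spectral_pnorm_def sset_def bil_def by simp

lemma bil_neg: "bil m n (\<lambda>i. - x i) Z y = - bil m n x Z y"
  unfolding bil_def by (simp add: sum_negf)

lemma bil_bound:
  assumes "\<forall>i<m. \<bar>x i\<bar> \<le> 1" "\<forall>j<n. \<bar>y j\<bar> \<le> 1"
  shows "bil m n x Z y \<le> (\<Sum>i<m. \<Sum>j<n. \<bar>Z i j\<bar>)"
  unfolding bil_def
proof (intro sum_mono)
  fix i j assume "i \<in> {..<m}" "j \<in> {..<n}"
  then have "\<bar>x i\<bar> \<le> 1" "\<bar>y j\<bar> \<le> 1" using assms by auto
  then have "\<bar>x i * Z i j * y j\<bar> \<le> 1 * \<bar>Z i j\<bar> * 1"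
    unfolding abs_mult by (intro mult_mono) auto
  then show "x i * Z i j * y j \<le> \<bar>Z i j\<bar>" by simp
qed

lemma sset_bdd: "p > 0 \<Longrightarrow> bdd_above (sset p m n Z)"
  unfolding sset_def bdd_above_def
  by (rule exI[of _ "\<Sum>i<m. \<Sum>j<n. \<bar>Z i j\<bar>"]) (auto intro!: bil_bound vp_le1)

lemma sset_ne: "0 < m \<Longrightarrow> 0 < n \<Longrightarrow> sset p m n Z \<noteq> {}"
  unfolding sset_def using vp_unitvec[of 0 m p] vp_unitvec[of 0 n p] by blast

lemma spec_ge:
  "p > 0 \<Longrightarrow> vec_pnorm p m x = 1 \<Longrightarrow> vec_pnorm p n y = 1 \<Longrightarrow> bil m n x Z y \<le> spectral_pnorm p m n Z"
proof -
  assume a: "p > 0" "vec_pnorm p m x = 1" "vec_pnorm p n y = 1"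
  have "bil m n x Z y \<in> sset p m n Z" using a unfolding sset_def by blast
  then show ?thesis unfolding spectral_sset using sset_bdd[OF a(1)] by (rule cSup_upper)
qed

lemma spec_nonneg:
  assumes "p > 0" "0 < m" "0 < n"
  shows "spectral_pnorm p m n Z \<ge> 0"
proof -
  have x: "vec_pnorm p m (\<lambda>i. if i = 0 then 1 else 0) = 1" using assms vp_unitvec by blast
  have y: "vec_pnorm p n (\<lambda>i. if i = 0 then 1 else 0) = 1" using assms vp_unitvec by blast
  have "bil m n (\<lambda>i. if i = 0 then 1 else 0) Z (\<lambda>i. if i = 0 then 1 else 0) \<le> spectral_pnorm p m n Z"
    using spec_ge[OF assms(1) x y] .
  moreover have "bil m n (\<lambda>i. - (if i = 0 then 1 else 0)) Z (\<lambda>i. if i = 0 then 1 else 0) \<le> spectral_pnorm p m n Z"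
    using spec_ge[OF assms(1) _ y] x by simp
  ultimately show ?thesis unfolding bil_neg by linarith
qed

lemma spec_le_one:
  assumes "0 < m" "0 < n" "\<And>x y. vec_pnorm p m x = 1 \<Longrightarrow> vec_pnorm p n y = 1 \<Longrightarrow> bil m n x Z y \<le> c"
  shows "spectral_pnorm p m n Z \<le> c"
  unfolding spectral_sset by (rule cSup_least) (use sset_ne assms in \<open>auto simp: sset_def\<close>)

lemma conj2:
  assumes "p > 0" "spectral_pnorm p m n Z \<le> 1"
  shows "mat_inner m n A Z \<le> nuclear_pnorm p m n A"
proof (cases "n = 0")
  case True
  have "nuclear_pnorm p m n A \<ge> 0"
  proof -
    have "dec p m n A 0 (\<lambda>_. 0) (\<lambda>_ _. 0) (\<lambda>_ _. 0)" using True by (simp add: dec_def)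
    then have "nset p m n A \<noteq> {}" unfolding nset_def by blast
    then show ?thesis unfolding nuclear_nset
      by (intro cInf_greatest) (auto simp: nset_nonneg)
  qed
  then show ?thesis using True by (simp add: mat_inner_def)
next
  case False
  then have n0: "0 < n" by simp
  have "mat_inner m n A Z \<le> v" if "v \<in> nset p m n A" for v
  proof -
    obtain r l xs ys where d: "dec p m n A r l xs ys" "v = (\<Sum>k<r. \<bar>l k\<bar>)"
      using \<open>v \<in> nset p m n A\<close> unfolding nset_def by blast
    have "mat_inner m n A Z = (\<Sum>i<m. \<Sum>j<n. (\<Sum>k<r. l k * xs k i * ys k j) * Z i j)"
      unfolding mat_inner_def using d(1) unfolding dec_def by (intro sum.cong refl) auto
    also have "\<dots> = (\<Sum>k<r. l k * bil m n (xs k) Z (ys k))"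
      unfolding bil_def
      by (simp add: sum_distrib_left sum_distrib_right sum.swap[of _ "{..<r}"] mult_ac)
    also have "\<dots> \<le> (\<Sum>k<r. \<bar>l k\<bar> * 1)"
    proof (intro sum_mono)
      fix k assume "k \<in> {..<r}"
      then have u: "vec_pnorm p m (xs k) = 1" "vec_pnorm p n (ys k) = 1" using d(1) unfolding dec_def by auto
      have "l k * bil m n (xs k) Z (ys k) \<le> \<bar>l k\<bar> * spectral_pnorm p m n Z"
      proof (cases "l k \<ge> 0")
        case True
        then show ?thesis using spec_ge[OF assms(1) u] by (simp add: mult_left_mono)
      next
        case False
        have "bil m n (\<lambda>i. - xs k i) Z (ys k) \<le> spectral_pnorm p m n Z"
          using spec_ge[OF assms(1) _ u(2)] u(1) by simp
        then have "\<bar>l k\<bar> * bil m n (\<lambda>i. - xs k i) Z (ys k) \<le> \<bar>l k\<bar> * spectral_pnorm p m n Z"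
          by (simp add: mult_left_mono)
        then show ?thesis using False unfolding bil_neg by simp
      qed
      also have "\<dots> \<le> \<bar>l k\<bar> * 1" using assms(2) by (intro mult_left_mono) auto
      finally show "l k * bil m n (xs k) Z (ys k) \<le> \<bar>l k\<bar> * 1" .
    qed
    finally show ?thesis using d(2) by simp
  qed
  then show ?thesis unfolding nuclear_nset by (intro cInf_greatest) (auto simp: nset_ne n0)
qed

definition Emat :: "nat \<Rightarrow> nat \<Rightarrow> nat \<Rightarrow> nat \<Rightarrow> real" where
  "Emat i j = (\<lambda>a b. if a = i \<and> b = j then 1 else 0)"

definition blk :: "nat \<Rightarrow> nat \<Rightarrow> (nat \<Rightarrow> nat \<Rightarrow> real) \<Rightarrow> nat \<Rightarrow> nat \<Rightarrow> real" where
  "blk m n c = (\<Sum>i<m. \<Sum>j<n. c i j *\<^sub>R Emat i j)"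

lemma sum_fun_apply: "(sum f S) x = sum (\<lambda>i. f i x) S"
  by (induction S rule: infinite_finite_induct) auto

lemma blk_apply: "blk m n c a b = (if a < m \<and> b < n then c a b else 0)"
proof -
  have "blk m n c a b = (\<Sum>i<m. \<Sum>j<n. c i j * Emat i j a b)"
    unfolding blk_def by (simp add: sum_fun_apply)
  also have "\<dots> = (\<Sum>i<m. \<Sum>j<n. if j = b then (if i = a then c i j else 0) else 0)"
    unfolding Emat_def by (intro sum.cong refl) auto
  also have "\<dots> = (\<Sum>i<m. if b < n then (if i = a then c i b else 0) else 0)"
    by (subst sum.delta) (simp_all only: lessThan_iff finite_lessThan)
  also have "\<dots> = (if a < m \<and> b < n then c a b else 0)"
    by (cases "b < n") (simp_all add: sum.delta)
  finally show ?thesis .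
qed

lemma linon_sum:
  assumes "linon W g" "subspace W" "finite S" "\<forall>i\<in>S. f i \<in> W"
  shows "g (sum f S) = (\<Sum>i\<in>S. g (f i))"
  using assms(3,4)
proof (induction S rule: finite_induct)
  case empty
  have "g (0 *\<^sub>R 0) = 0 * g 0" using assms(1,2) unfolding linon_def by (meson subspace_0)
  then show ?case by simp
next
  case (insert a S)
  have "sum f S \<in> W" using insert assms(2) by (simp add: subspace_sum)
  then show ?case using insert assms(1) unfolding linon_def by simp
qed

lemma blk_span: "blk m n c \<in> span {Emat i j | i j. i < m \<and> j < n}"
  unfolding blk_def by (intro span_sum span_scale span_base) auto

lemma g_blk:
  assumes "linon W g" "subspace W" "{Emat i j | i j. i < m \<and> j < n} \<subseteq> W"
  shows "g (blk m n c) = (\<Sum>i<m. \<Sum>j<n. c i j * g (Emat i j))"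
proof -
  have E: "Emat i j \<in> W" if "i < m" "j < n" for i j using assms(3) that by blast
  have "g (blk m n c) = (\<Sum>i<m. g (\<Sum>j<n. c i j *\<^sub>R Emat i j))"
    unfolding blk_def using E assms(2)
    by (intro linon_sum[OF assms(1,2)]) (auto intro!: subspace_sum subspace_scale)
  also have "\<dots> = (\<Sum>i<m. \<Sum>j<n. g (c i j *\<^sub>R Emat i j))"
    using E assms(2) by (intro sum.cong refl linon_sum[OF assms(1,2)]) (auto intro!: subspace_scale)
  also have "\<dots> = (\<Sum>i<m. \<Sum>j<n. c i j * g (Emat i j))"
    using E assms(1) unfolding linon_def by (intro sum.cong refl) auto
  finally show ?thesis .
qed

lemma conj1:
  assumes "p > 0" "0 < m" "0 < n"
  shows "\<exists>Z. spectral_pnorm p m n Z \<le> 1 \<and> mat_inner m n A Z = nuclear_pnorm p m n A"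
proof -
  let ?N = "nuclear_pnorm p m n"
  let ?B = "{Emat i j | i j. i < m \<and> j < n}"
  have finB: "finite ?B"
  proof -
    have "?B = (\<lambda>(i, j). Emat i j) ` ({..<m} \<times> {..<n})" by auto
    then show ?thesis by simp
  qed
  obtain g where g: "linon (span (insert A ?B)) g" "\<forall>x\<in>span (insert A ?B). g x \<le> ?N x" "g A = ?N A"
    using hb_finite[of ?N, OF nuc_add[OF assms(3)] nuc_scale[OF assms(3)] nuc_nonneg[OF assms(3)] finB]
    by blast
  let ?W = "span (insert A ?B)"
  have W: "subspace ?W" by simp
  have BW: "?B \<subseteq> ?W" by (meson span_superset subset_insertI subset_trans)
  have blkW: "blk m n c \<in> ?W" for c
    using blk_span span_mono[OF subset_insertI] by blast
  have AW: "A \<in> ?W" by (simp add: span_base)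
  have gdiff: "g (x - y) = g x - g y" if "x \<in> ?W" "y \<in> ?W" for x y
  proof -
    have "(-1) *\<^sub>R y \<in> ?W" using that(2) by (rule span_scale)
    then have "g (x + (-1) *\<^sub>R y) = g x + g ((-1) *\<^sub>R y)" using g(1) that unfolding linon_def by blast
    also have "g ((-1) *\<^sub>R y) = (-1) * g y" using g(1) that unfolding linon_def by blast
    moreover have "x + (-1) *\<^sub>R y = x - y" by (rule ext)+ simp
    ultimately show ?thesis by simp
  qed
  have bz: "?N x \<le> 0" if "x \<in> ?W" "\<forall>i<m. \<forall>j<n. x i j = 0" for x
    using nuc_blockzero that by blast
  define Z where "Z i j = g (Emat i j)" for i j
  show ?thesis
  proof (intro exI conjI)
    show "spectral_pnorm p m n Z \<le> 1"
    proof (rule spec_le_one[OF assms(2,3)])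
      fix x y assume u: "vec_pnorm p m x = 1" "vec_pnorm p n y = 1"
      let ?M = "blk m n (\<lambda>i j. x i * y j)"
      have "bil m n x Z y = g ?M"
        unfolding g_blk[OF g(1) W BW] bil_def Z_def by (simp add: mult_ac)
      also have "\<dots> \<le> ?N ?M" using g(2) blkW by blast
      also have "\<dots> \<le> ?N (\<lambda>i j. x i * y j) + ?N (?M - (\<lambda>i j. x i * y j))"
        using nuc_add[OF assms(3), of p m "\<lambda>i j. x i * y j" "?M - (\<lambda>i j. x i * y j)"] by simp
      also have "\<dots> \<le> 1 + 0"
        by (intro add_mono nuc_rank1[OF u] nuc_blockzero) (auto simp: blk_apply)
      finally show "bil m n x Z y \<le> 1" by simp
    qed
  next
    have "mat_inner m n A Z = g (blk m n A)"
      unfolding g_blk[OF g(1) W BW] mat_inner_def Z_def by simp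
    moreover have "g (A - blk m n A) \<le> 0"
    proof -
      have d: "A - blk m n A \<in> ?W" using AW blkW by (rule span_diff)
      then have "g (A - blk m n A) \<le> ?N (A - blk m n A)" using g(2) by blast
      also have "\<dots> \<le> 0" using bz[OF d] by (simp add: blk_apply)
      finally show ?thesis .
    qed
    moreover have "g (blk m n A - A) \<le> 0"
    proof -
      have d: "blk m n A - A \<in> ?W" using blkW AW by (rule span_diff)
      then have "g (blk m n A - A) \<le> ?N (blk m n A - A)" using g(2) by blast
      also have "\<dots> \<le> 0" using bz[OF d] by (simp add: blk_apply)
      finally show ?thesis .
    qed
    ultimately show "mat_inner m n A Z = ?N A"
      using gdiff[OF AW blkW[of A]] gdiff[OF blkW[of A] AW] g(3) by linarith
  qed
qed

definition psdon :: "nat set \<Rightarrow> (nat \<Rightarrow> nat \<Rightarrow> real) \<Rightarrow> bool" where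
  "psdon I X \<longleftrightarrow> (\<forall>i\<in>I. \<forall>j\<in>I. X i j = X j i) \<and> (\<forall>x. (\<Sum>i\<in>I. \<Sum>j\<in>I. x i * X i j * x j) \<ge> 0)"

lemma psdon_quad: "psdon I X \<Longrightarrow> (\<Sum>i\<in>I. \<Sum>j\<in>I. x i * X i j * x j) \<ge> 0"
  unfolding psdon_def by blast

lemma psdon_restrict:
  assumes "psdon (insert a J) X" "a \<notin> J" "finite J"
  shows "(\<Sum>i\<in>J. \<Sum>j\<in>J. x i * X i j * x j) \<ge> 0"
proof -
  let ?x = "\<lambda>i. if i = a then 0 else x i"
  have "(\<Sum>i\<in>insert a J. \<Sum>j\<in>insert a J. ?x i * X i j * ?x j) \<ge> 0" by (rule psdon_quad[OF assms(1)])
  also have "(\<Sum>i\<in>insert a J. \<Sum>j\<in>insert a J. ?x i * X i j * ?x j) = (\<Sum>i\<in>J. \<Sum>j\<in>J. x i * X i j * x j)"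
  proof -
    have "(\<Sum>i\<in>insert a J. \<Sum>j\<in>insert a J. ?x i * X i j * ?x j) = (\<Sum>i\<in>J. \<Sum>j\<in>insert a J. ?x i * X i j * ?x j)"
      using assms(2,3) by (subst sum.insert) auto
    also have "\<dots> = (\<Sum>i\<in>J. \<Sum>j\<in>J. ?x i * X i j * ?x j)"
      by (rule sum.cong[OF refl]) (use assms(2,3) in simp)
    also have "\<dots> = (\<Sum>i\<in>J. \<Sum>j\<in>J. x i * X i j * x j)"
    proof (intro sum.cong refl)
      fix i j assume "i \<in> J" "j \<in> J"
      then have "i \<noteq> a" "j \<noteq> a" using assms(2) by auto
      then show "?x i * X i j * ?x j = x i * X i j * x j" by simp
    qed
    finally show ?thesis .
  qed
  finally show ?thesis .
qed

lemma quad_insert: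
  fixes X :: "nat \<Rightarrow> nat \<Rightarrow> real"
  assumes "a \<notin> J" "finite J" "\<forall>i\<in>insert a J. \<forall>j\<in>insert a J. X i j = X j i"
  shows "(\<Sum>i\<in>insert a J. \<Sum>j\<in>insert a J. x i * X i j * x j)
     = x a * X a a * x a + 2 * x a * (\<Sum>j\<in>J. X a j * x j) + (\<Sum>i\<in>J. \<Sum>j\<in>J. x i * X i j * x j)"
proof -
  have s: "(\<Sum>i\<in>J. x i * X i a * x a) = x a * (\<Sum>j\<in>J. X a j * x j)"
  proof -
    have "(\<Sum>i\<in>J. x i * X i a * x a) = (\<Sum>i\<in>J. x a * (X a i * x i))"
    proof (intro sum.cong refl)
      fix i assume "i \<in> J"
      then have "X i a = X a i" using assms(3) by blast
      then show "x i * X i a * x a = x a * (X a i * x i)" by simp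
    qed
    then show ?thesis by (simp add: sum_distrib_left)
  qed
  have "(\<Sum>i\<in>insert a J. \<Sum>j\<in>insert a J. x i * X i j * x j)
      = (x a * X a a * x a + (\<Sum>j\<in>J. x a * X a j * x j)) + (\<Sum>i\<in>J. x i * X i a * x a + (\<Sum>j\<in>J. x i * X i j * x j))"
    using assms(1,2) by (simp add: sum.insert)
  also have "\<dots> = x a * X a a * x a + (\<Sum>j\<in>J. x a * X a j * x j) + (\<Sum>i\<in>J. x i * X i a * x a) + (\<Sum>i\<in>J. \<Sum>j\<in>J. x i * X i j * x j)"
    by (simp add: sum.distrib)
  also have "(\<Sum>j\<in>J. x a * X a j * x j) = x a * (\<Sum>j\<in>J. X a j * x j)"
    by (simp add: sum_distrib_left mult_ac)
  finally show ?thesis using s by (simp add: algebra_simps)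
qed

lemma gram_exists:
  assumes "finite I" "psdon I X"
  shows "\<exists>u. \<forall>i\<in>I. \<forall>j\<in>I. (\<Sum>k\<in>I. u i k * u j k) = X i j"
  using assms
proof (induction I arbitrary: X rule: finite_induct)
  case empty
  then show ?case by simp
next
  case (insert a J)
  have sym: "\<forall>i\<in>insert a J. \<forall>j\<in>insert a J. X i j = X j i" using insert.prems unfolding psdon_def by blast
  have Xaa: "X a a \<ge> 0"
  proof -
    have "(\<Sum>i\<in>insert a J. \<Sum>j\<in>insert a J. (if i = a then 1 else 0) * X i j * (if j = a then 1 else 0)) \<ge> 0"
      by (rule psdon_quad[OF insert.prems])
    also have "(\<Sum>i\<in>insert a J. \<Sum>j\<in>insert a J. (if i = a then 1 else 0) * X i j * (if j = a then 1 else 0))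
       = (\<Sum>i\<in>insert a J. if i = a then (\<Sum>j\<in>insert a J. X a j * (if j = a then 1 else 0)) else 0)"
      by (rule sum.cong[OF refl]) (simp add: sum_distrib_left)
    also have "\<dots> = (\<Sum>j\<in>insert a J. X a j * (if j = a then 1 else 0))"
      using insert.hyps by simp
    also have "\<dots> = (\<Sum>j\<in>insert a J. if j = a then X a a else 0)"
      by (rule sum.cong[OF refl]) simp
    also have "\<dots> = X a a" using insert.hyps by simp
    finally show ?thesis .
  qed
  show ?case
  proof (cases "X a a = 0")
    case True
    have Xaj: "X a j = 0" if "j \<in> J" for j
    proof (rule ccontr)
      assume ne: "X a j \<noteq> 0"
      define t where "t = - (X j j + 1) / (2 * X a j)"
      let ?x = "\<lambda>i. if i = a then t else if i = j then 1 else (0::real)"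
      have "(\<Sum>i\<in>insert a J. \<Sum>j\<in>insert a J. ?x i * X i j * ?x j) \<ge> 0"
        by (rule psdon_quad[OF insert.prems])
      also have "(\<Sum>i\<in>insert a J. \<Sum>j\<in>insert a J. ?x i * X i j * ?x j) = 2 * t * X a j + X j j"
      proof -
        have jne: "j \<noteq> a" using that insert.hyps by auto
        have "(\<Sum>i\<in>insert a J. \<Sum>j\<in>insert a J. ?x i * X i j * ?x j)
          = ?x a * X a a * ?x a + 2 * ?x a * (\<Sum>j'\<in>J. X a j' * ?x j') + (\<Sum>i\<in>J. \<Sum>j'\<in>J. ?x i * X i j' * ?x j')"
          by (rule quad_insert[OF insert.hyps(2,1) sym])
        also have "(\<Sum>j'\<in>J. X a j' * ?x j') = X a j"
        proof -
          have "(\<Sum>j'\<in>J. X a j' * ?x j') = (\<Sum>j'\<in>J. if j' = j then X a j else 0)"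
          proof (rule sum.cong[OF refl])
            fix j' assume "j' \<in> J"
            then have "j' \<noteq> a" using insert.hyps by auto
            then show "X a j' * ?x j' = (if j' = j then X a j else 0)" by simp
          qed
          also have "\<dots> = X a j" using that insert.hyps(1) by simp
          finally show ?thesis .
        qed
        also have "(\<Sum>i\<in>J. \<Sum>j'\<in>J. ?x i * X i j' * ?x j') = X j j"
        proof -
          have "(\<Sum>i\<in>J. \<Sum>j'\<in>J. ?x i * X i j' * ?x j') = (\<Sum>i\<in>J. if i = j then (\<Sum>j'\<in>J. X j j' * ?x j') else 0)"
          proof (rule sum.cong[OF refl])
            fix i assume "i \<in> J"
            then have "i \<noteq> a" using insert.hyps by auto
            then show "(\<Sum>j'\<in>J. ?x i * X i j' * ?x j') = (if i = j then (\<Sum>j'\<in>J. X j j' * ?x j') else 0)"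
              by simp
          qed
          also have "\<dots> = (\<Sum>j'\<in>J. X j j' * ?x j')" using that insert.hyps by simp
          also have "\<dots> = (\<Sum>j'\<in>J. if j' = j then X j j else 0)"
          proof (rule sum.cong[OF refl])
            fix j' assume "j' \<in> J"
            then have "j' \<noteq> a" using insert.hyps by auto
            then show "X j j' * ?x j' = (if j' = j then X j j else 0)" by simp
          qed
          also have "\<dots> = X j j" using that insert.hyps by simp
          finally show ?thesis .
        qed
        finally show ?thesis using True jne by simp
      qed
      also have "2 * t * X a j + X j j = -1" unfolding t_def using ne by (simp add: field_simps)
      finally show False by simp
    qed
    have "psdon J X" unfolding psdon_def using sym psdon_restrict[OF insert.prems insert.hyps(2,1)] by blast
    then obtain u where u: "\<forall>i\<in>J. \<forall>j\<in>J. (\<Sum>k\<in>J. u i k * u j k) = X i j" using insert.IH by blast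
    define v where "v i k = (if i = a \<or> k = a then 0 else u i k)" for i k
    show ?thesis
    proof (intro exI ballI)
      fix i j assume ij: "i \<in> insert a J" "j \<in> insert a J"
      have "(\<Sum>k\<in>insert a J. v i k * v j k) = (\<Sum>k\<in>J. v i k * v j k)"
        using insert.hyps by (simp add: sum.insert v_def)
      also have "\<dots> = (if i = a \<or> j = a then 0 else (\<Sum>k\<in>J. u i k * u j k))"
        using insert.hyps unfolding v_def by (auto intro!: sum.cong)
      also have "\<dots> = X i j"
      proof (cases "i = a \<or> j = a")
        case c: True
        have "X i j = 0"
        proof (cases "i = a")
          case True
          then show ?thesis using ij Xaj \<open>X a a = 0\<close> by (cases "j = a") auto
        next
          case False
          then have "j = a" "i \<in> J" using c ij by auto
          moreover have "X i a = X a i" using sym ij \<open>j = a\<close> by blast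
          ultimately show ?thesis using Xaj by simp
        qed
        then show ?thesis using c by simp
      next
        case False
        then have "i \<in> J" "j \<in> J" using ij by auto
        then show ?thesis using u False by simp
      qed
      finally show "(\<Sum>k\<in>insert a J. v i k * v j k) = X i j" .
    qed
  next
    case False
    then have pos: "X a a > 0" using Xaa by simp
    define s where "s = sqrt (X a a)"
    have s: "s > 0" "s * s = X a a" using pos unfolding s_def by simp_all
    define Y where "Y i j = X i j - X i a * X a j / X a a" for i j
    have "psdon J Y" unfolding psdon_def
    proof (intro conjI ballI allI)
      fix i j assume ij: "i \<in> J" "j \<in> J"
      have "X i j = X j i" using sym ij by blast
      moreover have "X i a = X a i" using sym ij by blast
      moreover have "X a j = X j a" using sym ij by blast
      ultimately have "X i j = X j i" "X i a = X a i" "X a j = X j a" by auto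
      then show "Y i j = Y j i" unfolding Y_def by simp
    next
      fix x
      define b where "b = (\<Sum>j\<in>J. X a j * x j)"
      define x' where "x' i = (if i = a then - b / X a a else x i)" for i
      have xJ: "\<forall>i\<in>J. x' i = x i" unfolding x'_def using insert.hyps by auto
      have "0 \<le> (\<Sum>i\<in>insert a J. \<Sum>j\<in>insert a J. x' i * X i j * x' j)"
        by (rule psdon_quad[OF insert.prems])
      also have "\<dots> = x' a * X a a * x' a + 2 * x' a * b + (\<Sum>i\<in>J. \<Sum>j\<in>J. x i * X i j * x j)"
        unfolding quad_insert[OF insert.hyps(2,1) sym] b_def using xJ
        by (simp cong: sum.cong)
      also have "\<dots> = (\<Sum>i\<in>J. \<Sum>j\<in>J. x i * X i j * x j) - b * b / X a a"
        unfolding x'_def using pos by (simp add: field_simps)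
      also have "b * b / X a a = (\<Sum>i\<in>J. \<Sum>j\<in>J. x i * (X i a * X a j / X a a) * x j)"
      proof -
        have "b * b = (\<Sum>i\<in>J. \<Sum>j\<in>J. (X a i * x i) * (X a j * x j))"
          unfolding b_def by (simp add: sum_product)
        also have "\<dots> = (\<Sum>i\<in>J. \<Sum>j\<in>J. x i * (X i a * X a j) * x j)"
        proof (intro sum.cong refl)
          fix i j assume ij: "i \<in> J" "j \<in> J"
          have "X i a = X a i" using sym ij by blast
          then show "(X a i * x i) * (X a j * x j) = x i * (X i a * X a j) * x j" by simp
        qed
        finally show ?thesis by (simp add: sum_divide_distrib mult_ac)
      qed
      also have "(\<Sum>i\<in>J. \<Sum>j\<in>J. x i * X i j * x j) - (\<Sum>i\<in>J. \<Sum>j\<in>J. x i * (X i a * X a j / X a a) * x j)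
          = (\<Sum>i\<in>J. \<Sum>j\<in>J. x i * Y i j * x j)"
        unfolding Y_def by (simp add: sum_subtractf[symmetric] algebra_simps)
      finally show "0 \<le> (\<Sum>i\<in>J. \<Sum>j\<in>J. x i * Y i j * x j)" .
    qed
    then obtain u where u: "\<forall>i\<in>J. \<forall>j\<in>J. (\<Sum>k\<in>J. u i k * u j k) = Y i j" using insert.IH by blast
    define v where "v i k = (if k = a then X i a / s else if i = a then 0 else u i k)" for i k
    show ?thesis
    proof (intro exI ballI)
      fix i j assume ij: "i \<in> insert a J" "j \<in> insert a J"
      have "(\<Sum>k\<in>insert a J. v i k * v j k) = X i a / s * (X j a / s) + (\<Sum>k\<in>J. v i k * v j k)"
        using insert.hyps by (simp add: sum.insert v_def)
      also have "(\<Sum>k\<in>J. v i k * v j k) = (if i = a \<or> j = a then 0 else (\<Sum>k\<in>J. u i k * u j k))"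
      proof -
        have "(\<Sum>k\<in>J. v i k * v j k) = (\<Sum>k\<in>J. if i = a \<or> j = a then 0 else u i k * u j k)"
        proof (rule sum.cong[OF refl])
          fix k assume "k \<in> J"
          then have "k \<noteq> a" using insert.hyps by auto
          then show "v i k * v j k = (if i = a \<or> j = a then 0 else u i k * u j k)" unfolding v_def by auto
        qed
        then show ?thesis by (cases "i = a \<or> j = a") simp_all
      qed
      also have "X i a / s * (X j a / s) = X i a * X j a / X a a"
        using s by (simp add: field_simps)
      also have "X i a * X j a / X a a + (if i = a \<or> j = a then 0 else (\<Sum>k\<in>J. u i k * u j k)) = X i j"
      proof (cases "i = a \<or> j = a")
        case True
        show ?thesis
        proof (cases "i = a")
          case True
          then have "X j a = X a j" using sym ij by blast
          then show ?thesis using True pos by simp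
        next
          case False
          then have "j = a" using \<open>i = a \<or> j = a\<close> by simp
          then show ?thesis using False pos by simp
        qed
      next
        case False
        then have "i \<in> J" "j \<in> J" using ij by auto
        moreover have "X j a = X a j" using sym ij by blast
        ultimately show ?thesis using False u unfolding Y_def by simp
      qed
      finally show "(\<Sum>k\<in>insert a J. v i k * v j k) = X i j" .
    qed
  qed
qed

definition eps :: "nat \<Rightarrow> nat \<Rightarrow> real" where
  "eps k t = (if odd (t div 2 ^ k) then 1 else -1)"

definition ip :: "nat \<Rightarrow> (nat \<Rightarrow> real) \<Rightarrow> (nat \<Rightarrow> real) \<Rightarrow> real" where
  "ip d x y = (\<Sum>k<d. x k * y k)"

definition Uf :: "nat \<Rightarrow> (nat \<Rightarrow> real) \<Rightarrow> nat \<Rightarrow> real" where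
  "Uf d u t = (\<Sum>k<d. u k * eps k t)"

lemma split_samples: "(\<Sum>t<2 ^ Suc d. F t) = (\<Sum>t<2 ^ d. F t + F (t + 2 ^ d) :: real)" for F :: "nat \<Rightarrow> real"
proof -
  have "(2::nat) ^ Suc d = 2 ^ d + 2 ^ d" by simp
  then have "(\<Sum>t<2 ^ Suc d. F t) = (\<Sum>t<2 ^ d. F t) + (\<Sum>t<2 ^ d. F (2 ^ d + t))"
    by (simp only: sum_split_add)
  then show ?thesis by (simp add: sum.distrib add.commute)
qed

lemma eps_low:
  assumes "k < d"
  shows "eps k (t + 2 ^ d) = eps k t"
proof -
  have p: "(2::nat) ^ d = 2 ^ (d - k) * 2 ^ k" using assms by (simp add: power_add[symmetric])
  have "(t + 2 ^ d) div 2 ^ k = t div 2 ^ k + 2 ^ (d - k)" unfolding p by simp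
  moreover have "even ((2::nat) ^ (d - k))" using assms by simp
  ultimately have "odd ((t + 2 ^ d) div 2 ^ k) \<longleftrightarrow> odd (t div 2 ^ k)" by simp
  then show ?thesis unfolding eps_def by simp
qed

lemma eps_top1: "t < 2 ^ d \<Longrightarrow> eps d t = -1"
  unfolding eps_def by simp

lemma eps_top2: "t < 2 ^ d \<Longrightarrow> eps d (t + 2 ^ d) = 1"
  unfolding eps_def by simp

lemma Uf_shift: "Uf d u (t + 2 ^ d) = Uf d u t"
  unfolding Uf_def by (intro sum.cong refl) (simp add: eps_low)

lemma Uf_lo: "t < 2 ^ d \<Longrightarrow> Uf (Suc d) u t = Uf d u t - u d"
  unfolding Uf_def by (simp add: eps_top1)

lemma Uf_hi: "t < 2 ^ d \<Longrightarrow> Uf (Suc d) u (t + 2 ^ d) = Uf d u t + u d"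
  using Uf_shift[of d u t] unfolding Uf_def by (simp add: eps_top2)

lemma E2: "(\<Sum>t<2 ^ d. Uf d u t * Uf d v t) = 2 ^ d * ip d u v"
proof (induction d)
  case 0
  then show ?case by (simp add: Uf_def ip_def)
next
  case (Suc d)
  have "(\<Sum>t<2 ^ Suc d. Uf (Suc d) u t * Uf (Suc d) v t)
      = (\<Sum>t<2 ^ d. (Uf d u t - u d) * (Uf d v t - v d) + (Uf d u t + u d) * (Uf d v t + v d))"
    unfolding split_samples by (intro sum.cong refl) (simp add: Uf_lo Uf_hi)
  also have "\<dots> = (\<Sum>t<2 ^ d. 2 * (Uf d u t * Uf d v t) + 2 * (u d * v d))"
    by (intro sum.cong refl) (simp add: algebra_simps)
  also have "\<dots> = 2 * (\<Sum>t<2 ^ d. Uf d u t * Uf d v t) + 2 ^ d * (2 * (u d * v d))"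
    by (simp add: sum.distrib sum_distrib_left)
  also have "\<dots> = 2 ^ Suc d * ip (Suc d) u v"
    unfolding Suc.IH by (simp add: ip_def algebra_simps)
  finally show ?case .
qed

lemma E4: "(\<Sum>t<2 ^ d. (Uf d u t) ^ 4) \<le> 3 * 2 ^ d * (ip d u u) ^ 2"
proof (induction d)
  case 0
  then show ?case by (simp add: Uf_def ip_def)
next
  case (Suc d)
  let ?a = "u d"
  have "(\<Sum>t<2 ^ Suc d. (Uf (Suc d) u t) ^ 4)
      = (\<Sum>t<2 ^ d. (Uf d u t - ?a) ^ 4 + (Uf d u t + ?a) ^ 4)"
    unfolding split_samples by (intro sum.cong refl) (simp add: Uf_lo Uf_hi)
  also have "\<dots> = (\<Sum>t<2 ^ d. 2 * (Uf d u t) ^ 4 + 12 * ?a ^ 2 * (Uf d u t * Uf d u t) + 2 * ?a ^ 4)"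
    by (intro sum.cong refl) (simp add: power2_eq_square power4_eq_xxxx algebra_simps)
  also have "\<dots> = 2 * (\<Sum>t<2 ^ d. (Uf d u t) ^ 4) + 12 * ?a ^ 2 * (\<Sum>t<2 ^ d. Uf d u t * Uf d u t)
      + 2 ^ d * (2 * ?a ^ 4)"
    by (simp add: sum.distrib sum_distrib_left)
  also have "\<dots> \<le> 2 * (3 * 2 ^ d * (ip d u u) ^ 2) + 12 * ?a ^ 2 * (2 ^ d * ip d u u) + 2 ^ d * (2 * ?a ^ 4)"
    unfolding E2 using Suc.IH by simp
  also have "\<dots> \<le> 3 * 2 ^ Suc d * (ip (Suc d) u u) ^ 2"
  proof -
    have i: "ip (Suc d) u u = ip d u u + ?a ^ 2" by (simp add: ip_def power2_eq_square)
    have "3 * 2 ^ Suc d * (ip d u u + ?a ^ 2) ^ 2 - (2 * (3 * 2 ^ d * (ip d u u) ^ 2) + 12 * ?a ^ 2 * (2 ^ d * ip d u u) + 2 ^ d * (2 * ?a ^ 4))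
       = 2 ^ d * (4 * ?a ^ 4)"
      by (simp add: power2_eq_square power4_eq_xxxx algebra_simps)
    moreover have "(0::real) \<le> 2 ^ d * (4 * ?a ^ 4)" by simp
    ultimately show ?thesis unfolding i by linarith
  qed
  finally show ?case .
qed

definition sgnset :: "nat \<Rightarrow> nat \<Rightarrow> (nat \<Rightarrow> nat \<Rightarrow> real) \<Rightarrow> real set" where
  "sgnset m n a = {(\<Sum>i<m. \<Sum>j<n. a i j * e i * f j) | e f.
                    (\<forall>i<m. e i \<in> {-1, 1}) \<and> (\<forall>j<n. f j \<in> {-1, 1})}"

lemma sgnset_bdd: "bdd_above (sgnset m n a)"
proof -
  have "v \<le> (\<Sum>i<m. \<Sum>j<n. \<bar>a i j\<bar>)" if v: "v \<in> sgnset m n a" for v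
  proof -
    obtain e f where ef: "v = (\<Sum>i<m. \<Sum>j<n. a i j * e i * f j)" "\<forall>i<m. e i \<in> {-1, 1}" "\<forall>j<n. f j \<in> {-1, 1}"
      using v unfolding sgnset_def by blast
    have "a i j * e i * f j \<le> \<bar>a i j\<bar>" if "i < m" "j < n" for i j
    proof -
      have "\<bar>e i\<bar> = 1" "\<bar>f j\<bar> = 1" using ef that by auto
      then have "\<bar>a i j * e i * f j\<bar> = \<bar>a i j\<bar>" by (simp add: abs_mult)
      then show ?thesis by linarith
    qed
    then show ?thesis unfolding ef(1) by (intro sum_mono) auto
  qed
  then show ?thesis by (meson bdd_above.I)
qed

lemma sgnset_ne: "sgnset m n a \<noteq> {}"
proof -
  have "(\<Sum>i<m. \<Sum>j<n. a i j * (\<lambda>_. 1::real) i * (\<lambda>_. 1::real) j) \<in> sgnset m n a"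
    unfolding sgnset_def by (intro CollectI exI[of _ "\<lambda>_. 1::real"]) auto
  then show ?thesis by blast
qed

lemma pointwise:
  assumes "\<forall>i<m. \<bar>al i\<bar> \<le> 1" "\<forall>j<n. \<bar>be j\<bar> \<le> 1"
  shows "(\<Sum>i<m. \<Sum>j<n. a i j * al i * be j) \<le> Sup (sgnset m n a)"
proof -
  define c where "c i = (\<Sum>j<n. a i j * be j)" for i
  define e where "e i = (if c i \<ge> 0 then 1 else - 1 :: real)" for i
  define dd where "dd j = (\<Sum>i<m. a i j * e i)" for j
  define f where "f j = (if dd j \<ge> 0 then 1 else - 1 :: real)" for j
  have "(\<Sum>i<m. \<Sum>j<n. a i j * al i * be j) = (\<Sum>i<m. al i * c i)"
    unfolding c_def by (simp add: sum_distrib_left mult_ac)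
  also have "\<dots> \<le> (\<Sum>i<m. e i * c i)"
  proof (intro sum_mono)
    fix i assume "i \<in> {..<m}"
    then have "\<bar>al i\<bar> \<le> 1" using assms by auto
    then have "al i * c i \<le> \<bar>c i\<bar>"
      by (metis abs_ge_self abs_mult abs_of_nonneg abs_not_less_zero mult_left_le_one_le order_trans
          mult.commute abs_ge_zero)
    also have "\<bar>c i\<bar> = e i * c i" unfolding e_def by auto
    finally show "al i * c i \<le> e i * c i" .
  qed
  also have "\<dots> = (\<Sum>j<n. be j * dd j)"
    unfolding c_def dd_def by (simp add: sum_distrib_left sum_distrib_right sum.swap[of _ "{..<n}"] mult_ac)
  also have "\<dots> \<le> (\<Sum>j<n. f j * dd j)"
  proof (intro sum_mono)
    fix j assume "j \<in> {..<n}"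
    then have "\<bar>be j\<bar> \<le> 1" using assms by auto
    then have "be j * dd j \<le> \<bar>dd j\<bar>"
      by (metis abs_ge_self abs_mult abs_of_nonneg abs_not_less_zero mult_left_le_one_le order_trans
          mult.commute abs_ge_zero)
    also have "\<bar>dd j\<bar> = f j * dd j" unfolding f_def by auto
    finally show "be j * dd j \<le> f j * dd j" .
  qed
  also have "\<dots> = (\<Sum>i<m. \<Sum>j<n. a i j * e i * f j)"
    unfolding dd_def by (simp add: sum_distrib_left sum_distrib_right sum.swap[of _ "{..<n}"] mult_ac)
  also have "\<dots> \<le> Sup (sgnset m n a)"
  proof -
    have "(\<Sum>i<m. \<Sum>j<n. a i j * e i * f j) \<in> sgnset m n a"
      unfolding sgnset_def by (intro CollectI exI[of _ e] exI[of _ f]) (auto simp: e_def f_def)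
    then show ?thesis using sgnset_bdd by (rule cSup_upper)
  qed
  finally show ?thesis .
qed

definition Gval :: "nat \<Rightarrow> nat \<Rightarrow> (nat \<Rightarrow> nat \<Rightarrow> real) \<Rightarrow> nat \<Rightarrow> (nat \<Rightarrow> nat \<Rightarrow> real) \<Rightarrow> (nat \<Rightarrow> nat \<Rightarrow> real) \<Rightarrow> real" where
  "Gval m n a d x y = (\<Sum>i<m. \<Sum>j<n. a i j * ip d (x i) (y j))"

definition Gset :: "nat \<Rightarrow> nat \<Rightarrow> (nat \<Rightarrow> nat \<Rightarrow> real) \<Rightarrow> real set" where
  "Gset m n a = {Gval m n a d x y | d x y. (\<forall>i<m. ip d (x i) (x i) \<le> 1) \<and> (\<forall>j<n. ip d (y j) (y j) \<le> 1)}"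

lemma ip_abs:
  assumes "ip d x x \<le> 1" "ip d y y \<le> 1"
  shows "\<bar>ip d x y\<bar> \<le> 1"
proof -
  have "2 * ip d x y \<le> ip d x x + ip d y y"
  proof -
    have "2 * ip d x y = (\<Sum>k<d. 2 * (x k * y k))" unfolding ip_def by (simp add: sum_distrib_left)
    also have "\<dots> \<le> (\<Sum>k<d. x k * x k + y k * y k)"
    proof (intro sum_mono)
      fix k have "0 \<le> (x k - y k) * (x k - y k)" by simp
      then show "2 * (x k * y k) \<le> x k * x k + y k * y k" by (simp add: algebra_simps)
    qed
    finally show ?thesis unfolding ip_def by (simp add: sum.distrib)
  qed
  moreover have "- 2 * ip d x y \<le> ip d x x + ip d y y"
  proof -
    have "- 2 * ip d x y = (\<Sum>k<d. - 2 * (x k * y k))" unfolding ip_def by (simp add: sum_distrib_left)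
    also have "\<dots> \<le> (\<Sum>k<d. x k * x k + y k * y k)"
    proof (intro sum_mono)
      fix k have "0 \<le> (x k + y k) * (x k + y k)" by simp
      then show "- 2 * (x k * y k) \<le> x k * x k + y k * y k" by (simp add: algebra_simps)
    qed
    finally show ?thesis unfolding ip_def by (simp add: sum.distrib)
  qed
  ultimately show ?thesis using assms by linarith
qed

lemma ip_nonneg: "ip d x x \<ge> 0"
  unfolding ip_def by (intro sum_nonneg) simp

lemma Gset_bdd: "bdd_above (Gset m n a)"
proof -
  have "v \<le> (\<Sum>i<m. \<Sum>j<n. \<bar>a i j\<bar>)" if v: "v \<in> Gset m n a" for v
  proof -
    obtain d x y where dxy: "v = Gval m n a d x y" "\<forall>i<m. ip d (x i) (x i) \<le> 1" "\<forall>j<n. ip d (y j) (y j) \<le> 1"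
      using v unfolding Gset_def by blast
    have "a i j * ip d (x i) (y j) \<le> \<bar>a i j\<bar>" if "i < m" "j < n" for i j
    proof -
      have "\<bar>ip d (x i) (y j)\<bar> \<le> 1" using dxy that by (intro ip_abs) auto
      then have "\<bar>a i j\<bar> * \<bar>ip d (x i) (y j)\<bar> \<le> \<bar>a i j\<bar> * 1" by (intro mult_left_mono) auto
      then show ?thesis by (simp add: abs_mult[symmetric])
    qed
    then show ?thesis unfolding dxy(1) Gval_def by (intro sum_mono) auto
  qed
  then show ?thesis by (meson bdd_above.I)
qed

lemma Gset_ne: "Gset m n a \<noteq> {}"
proof -
  have "Gval m n a 0 (\<lambda>_ _. 0) (\<lambda>_ _. 0) \<in> Gset m n a"
    unfolding Gset_def
    by (intro CollectI exI[of _ 0] exI[of _ "\<lambda>_ _. 0::real"] exI[of _ "\<lambda>_ _. 0::real"]) (auto simp: ip_def)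
  then show ?thesis by blast
qed

lemma Gset_upper: "(\<forall>i<m. ip d (x i) (x i) \<le> 1) \<Longrightarrow> (\<forall>j<n. ip d (y j) (y j) \<le> 1)
   \<Longrightarrow> Gval m n a d x y \<le> Sup (Gset m n a)"
  by (rule cSup_upper[OF _ Gset_bdd]) (auto simp: Gset_def)

definition cl :: "real \<Rightarrow> real" where "cl z = max (-8) (min 8 z)"
definition tlf :: "real \<Rightarrow> real" where "tlf z = z - cl z"

lemma cl_abs: "\<bar>cl z\<bar> \<le> 8" unfolding cl_def by auto

lemma cl_sq: "cl z * cl z \<le> z * z"
proof -
  have "\<bar>cl z\<bar> \<le> \<bar>z\<bar>" unfolding cl_def by auto
  then have "\<bar>cl z\<bar> * \<bar>cl z\<bar> \<le> \<bar>z\<bar> * \<bar>z\<bar>" by (intro mult_mono) auto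
  then show ?thesis by (simp add: abs_mult[symmetric])
qed

lemma tlf_sq: "tlf z * tlf z \<le> z ^ 4 / 64"
proof (cases "\<bar>z\<bar> \<le> 8")
  case True
  then have "tlf z = 0" unfolding tlf_def cl_def by auto
  then show ?thesis by simp
next
  case False
  have "\<bar>tlf z\<bar> \<le> \<bar>z\<bar>" using False unfolding tlf_def cl_def by auto
  then have "tlf z * tlf z \<le> z * z"
    by (metis abs_mult_self_eq abs_ge_zero mult_mono)
  also have "z * z \<le> z * z * (z * z / 64)"
  proof -
    have "8 * 8 \<le> \<bar>z\<bar> * \<bar>z\<bar>" using False by (intro mult_mono) auto
    then have "1 \<le> z * z / 64" by (simp add: abs_mult_self_eq)
    then show ?thesis using mult_left_mono[of 1 "z * z / 64" "z * z"] by simp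
  qed
  also have "\<dots> = z ^ 4 / 64" by (simp add: power4_eq_xxxx)
  finally show ?thesis .
qed

lemma swap3: "(\<Sum>t<T. \<Sum>i<m. \<Sum>j<n. a i j * F i j t) = (\<Sum>i<m. \<Sum>j<n. a i j * (\<Sum>t<T. F i j t :: real))"
proof -
  have "(\<Sum>t<T. \<Sum>i<m. \<Sum>j<n. a i j * F i j t) = (\<Sum>i<m. \<Sum>t<T. \<Sum>j<n. a i j * F i j t)"
    by (rule sum.swap)
  also have "\<dots> = (\<Sum>i<m. \<Sum>j<n. \<Sum>t<T. a i j * F i j t)"
    by (intro sum.cong refl sum.swap)
  also have "\<dots> = (\<Sum>i<m. \<Sum>j<n. a i j * (\<Sum>t<T. F i j t))"
    by (simp add: sum_distrib_left)
  finally show ?thesis .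
qed

lemma ip_scaled:
  assumes "D > 0"
  shows "ip T (\<lambda>t. f t / sqrt D) (\<lambda>t. g t / sqrt D) = (\<Sum>t<T. f t * g t) / D"
proof -
  have "ip T (\<lambda>t. f t / sqrt D) (\<lambda>t. g t / sqrt D) = (\<Sum>t<T. f t * g t / (sqrt D * sqrt D))"
    unfolding ip_def by (intro sum.cong refl) simp
  also have "sqrt D * sqrt D = D" using assms by simp
  finally show ?thesis by (simp add: sum_divide_distrib)
qed


lemma key:
  assumes hx: "\<forall>i<m. ip d (x i) (x i) \<le> 1" and hy: "\<forall>j<n. ip d (y j) (y j) \<le> 1"
  shows "Gval m n a d x y \<le> 64 * Sup (sgnset m n a) + Sup (Gset m n a) / 2"
proof -
  define D :: real where "D = 2 ^ d"
  have D: "D > 0" unfolding D_def by simp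
  define T :: nat where "T = 2 ^ d"
  define U where "U i t = Uf d (x i) t" for i t
  define V where "V j t = Uf d (y j) t" for j t
  have Ufun: "U i = Uf d (x i)" for i by (rule ext) (simp add: U_def)
  have Vfun: "V j = Uf d (y j)" for j by (rule ext) (simp add: V_def)
  let ?S = "Sup (sgnset m n a)"
  let ?G = "Sup (Gset m n a)"
  have E2': "(\<Sum>t<T. F t * H t) = D * ip d f h" if "F = Uf d f" "H = Uf d h" for F H f h
    unfolding T_def D_def that by (rule E2)
  have "D * Gval m n a d x y = (\<Sum>i<m. \<Sum>j<n. a i j * (\<Sum>t<T. U i t * V j t))"
    unfolding Gval_def by (simp add: E2'[OF _ _] U_def V_def sum_distrib_left mult_ac)
  also have "\<dots> = (\<Sum>t<T. \<Sum>i<m. \<Sum>j<n. a i j * (U i t * V j t))"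
    by (rule swap3[symmetric])
  also have "\<dots> = (\<Sum>t<T. \<Sum>i<m. \<Sum>j<n. a i j * (cl (U i t) * cl (V j t)))
      + (\<Sum>t<T. \<Sum>i<m. \<Sum>j<n. a i j * (cl (U i t) * tlf (V j t)))
      + (\<Sum>t<T. \<Sum>i<m. \<Sum>j<n. a i j * (tlf (U i t) * V j t))"
    by (simp add: sum.distrib[symmetric] tlf_def algebra_simps)
  also have "\<dots> \<le> D * (64 * ?S) + D * (?G / 4) + D * (?G / 4)"
  proof (intro add_mono)
    have "(\<Sum>t<T. \<Sum>i<m. \<Sum>j<n. a i j * (cl (U i t) * cl (V j t))) \<le> (\<Sum>t<T. 64 * ?S)"
    proof (intro sum_mono)
      fix t
      have "(\<Sum>i<m. \<Sum>j<n. a i j * (cl (U i t) / 8) * (cl (V j t) / 8)) \<le> ?S"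
        by (rule pointwise) (use cl_abs in auto)
      moreover have "(\<Sum>i<m. \<Sum>j<n. a i j * (cl (U i t) * cl (V j t)))
          = 64 * (\<Sum>i<m. \<Sum>j<n. a i j * (cl (U i t) / 8) * (cl (V j t) / 8))"
        by (simp add: sum_distrib_left mult.assoc)
      ultimately show "(\<Sum>i<m. \<Sum>j<n. a i j * (cl (U i t) * cl (V j t))) \<le> 64 * ?S" by simp
    qed
    also have "\<dots> = D * (64 * ?S)" unfolding T_def D_def by simp
    finally show "(\<Sum>t<T. \<Sum>i<m. \<Sum>j<n. a i j * (cl (U i t) * cl (V j t))) \<le> D * (64 * ?S)" .
  next
    define p where "p i t = cl (U i t) / sqrt D" for i t
    define q where "q j t = 4 * tlf (V j t) / sqrt D" for j t
    have "(\<Sum>t<T. \<Sum>i<m. \<Sum>j<n. a i j * (cl (U i t) * tlf (V j t)))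
        = (\<Sum>i<m. \<Sum>j<n. a i j * (\<Sum>t<T. cl (U i t) * tlf (V j t)))" by (rule swap3)
    also have "\<dots> = D / 4 * Gval m n a T p q"
    proof -
      have "ip T (p i) (q j) = 4 * (\<Sum>t<T. cl (U i t) * tlf (V j t)) / D" for i j
      proof -
        have "ip T (p i) (q j) = (\<Sum>t<T. cl (U i t) * (4 * tlf (V j t))) / D"
          unfolding p_def q_def by (rule ip_scaled[OF D])
        then show ?thesis by (simp add: sum_distrib_left mult_ac)
      qed
      then have e: "D / 4 * ip T (p i) (q j) = (\<Sum>t<T. cl (U i t) * tlf (V j t))" for i j using D by simp
      have "D / 4 * Gval m n a T p q = (\<Sum>i<m. \<Sum>j<n. a i j * (D / 4 * ip T (p i) (q j)))"
        unfolding Gval_def by (simp add: sum_distrib_left mult_ac)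
      then show ?thesis by (simp only: e)
    qed
    also have "\<dots> \<le> D / 4 * ?G"
    proof (intro mult_left_mono Gset_upper allI impI)
      fix i assume "i < m"
      have "ip T (p i) (p i) = (\<Sum>t<T. cl (U i t) * cl (U i t)) / D"
        unfolding p_def by (rule ip_scaled[OF D])
      also have "\<dots> \<le> (\<Sum>t<T. U i t * U i t) / D"
        using D by (intro divide_right_mono sum_mono cl_sq) auto
      also have "\<dots> = ip d (x i) (x i)" using D E2'[OF Ufun Ufun] by simp
      also have "\<dots> \<le> 1" using hx \<open>i < m\<close> by auto
      finally show "ip T (p i) (p i) \<le> 1" .
    next
      fix j assume "j < n"
      have "ip T (q j) (q j) = (\<Sum>t<T. (4 * tlf (V j t)) * (4 * tlf (V j t))) / D"
        unfolding q_def by (rule ip_scaled[OF D])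
      also have "\<dots> = 16 * (\<Sum>t<T. tlf (V j t) * tlf (V j t)) / D"
        by (simp add: sum_distrib_left mult_ac)
      also have "\<dots> \<le> 16 * (\<Sum>t<T. (V j t) ^ 4 / 64) / D"
        using D by (intro divide_right_mono mult_left_mono sum_mono tlf_sq) auto
      also have "\<dots> = (\<Sum>t<T. (V j t) ^ 4) / (4 * D)"
        by (simp add: sum_divide_distrib[symmetric])
      also have "\<dots> \<le> (3 * D * (ip d (y j) (y j)) ^ 2) / (4 * D)"
        using D E4[of d "y j"] unfolding V_def T_def D_def by (intro divide_right_mono) auto
      also have "\<dots> \<le> (3 * D * 1) / (4 * D)"
      proof -
        have "(ip d (y j) (y j)) ^ 2 \<le> 1"
          using hy \<open>j < n\<close> ip_nonneg[of d "y j"] by (simp add: power_le_one)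
        then show ?thesis using D by (intro divide_right_mono mult_left_mono) auto
      qed
      also have "\<dots> \<le> 1" using D by simp
      finally show "ip T (q j) (q j) \<le> 1" .
    qed (use D in auto)
    finally show "(\<Sum>t<T. \<Sum>i<m. \<Sum>j<n. a i j * (cl (U i t) * tlf (V j t))) \<le> D * (?G / 4)" by simp
  next
    define p where "p i t = 4 * tlf (U i t) / sqrt D" for i t
    define q where "q j t = V j t / sqrt D" for j t
    have "(\<Sum>t<T. \<Sum>i<m. \<Sum>j<n. a i j * (tlf (U i t) * V j t))
        = (\<Sum>i<m. \<Sum>j<n. a i j * (\<Sum>t<T. tlf (U i t) * V j t))" by (rule swap3)
    also have "\<dots> = D / 4 * Gval m n a T p q"
    proof -
      have "ip T (p i) (q j) = 4 * (\<Sum>t<T. tlf (U i t) * V j t) / D" for i j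
      proof -
        have "ip T (p i) (q j) = (\<Sum>t<T. (4 * tlf (U i t)) * V j t) / D"
          unfolding p_def q_def by (rule ip_scaled[OF D])
        then show ?thesis by (simp add: sum_distrib_left mult_ac)
      qed
      then have e: "D / 4 * ip T (p i) (q j) = (\<Sum>t<T. tlf (U i t) * V j t)" for i j using D by simp
      have "D / 4 * Gval m n a T p q = (\<Sum>i<m. \<Sum>j<n. a i j * (D / 4 * ip T (p i) (q j)))"
        unfolding Gval_def by (simp add: sum_distrib_left mult_ac)
      then show ?thesis by (simp only: e)
    qed
    also have "\<dots> \<le> D / 4 * ?G"
    proof (intro mult_left_mono Gset_upper allI impI)
      fix j assume "j < n"
      have "ip T (q j) (q j) = (\<Sum>t<T. V j t * V j t) / D"
        unfolding q_def by (rule ip_scaled[OF D])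
      also have "\<dots> = ip d (y j) (y j)" using D E2'[OF Vfun Vfun] by simp
      also have "\<dots> \<le> 1" using hy \<open>j < n\<close> by auto
      finally show "ip T (q j) (q j) \<le> 1" .
    next
      fix i assume "i < m"
      have "ip T (p i) (p i) = (\<Sum>t<T. (4 * tlf (U i t)) * (4 * tlf (U i t))) / D"
        unfolding p_def by (rule ip_scaled[OF D])
      also have "\<dots> = 16 * (\<Sum>t<T. tlf (U i t) * tlf (U i t)) / D"
        by (simp add: sum_distrib_left mult_ac)
      also have "\<dots> \<le> 16 * (\<Sum>t<T. (U i t) ^ 4 / 64) / D"
        using D by (intro divide_right_mono mult_left_mono sum_mono tlf_sq) auto
      also have "\<dots> = (\<Sum>t<T. (U i t) ^ 4) / (4 * D)"
        by (simp add: sum_divide_distrib[symmetric])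
      also have "\<dots> \<le> (3 * D * (ip d (x i) (x i)) ^ 2) / (4 * D)"
        using D E4[of d "x i"] unfolding U_def T_def D_def by (intro divide_right_mono) auto
      also have "\<dots> \<le> (3 * D * 1) / (4 * D)"
      proof -
        have "(ip d (x i) (x i)) ^ 2 \<le> 1"
          using hx \<open>i < m\<close> ip_nonneg[of d "x i"] by (simp add: power_le_one)
        then show ?thesis using D by (intro divide_right_mono mult_left_mono) auto
      qed
      also have "\<dots> \<le> 1" using D by simp
      finally show "ip T (p i) (p i) \<le> 1" .
    qed (use D in auto)
    finally show "(\<Sum>t<T. \<Sum>i<m. \<Sum>j<n. a i j * (tlf (U i t) * V j t)) \<le> D * (?G / 4)" by simp
  qed
  finally have "D * Gval m n a d x y \<le> D * (64 * ?S + ?G / 2)" by (simp add: algebra_simps)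
  then show ?thesis using D by simp
qed

lemma vp_nonneg: "vec_pnorm p k x \<ge> 0"
  unfolding vec_pnorm_def by simp

lemma vp_zero:
  assumes "vec_pnorm p k x = 0" "p > 0" "i < k"
  shows "x i = 0"
proof -
  have "(\<Sum>i<k. \<bar>x i\<bar> powr p) = 0" using assms(1) unfolding vec_pnorm_def by simp
  then have "\<forall>i\<in>{..<k}. \<bar>x i\<bar> powr p = 0" by (subst sum_nonneg_eq_0_iff[symmetric]) auto
  then show ?thesis using assms(3) by simp
qed

lemma vp_div:
  assumes "c > 0" "p > 0"
  shows "vec_pnorm p k (\<lambda>i. x i / c) = vec_pnorm p k x / c"
proof -
  have "(\<Sum>i<k. \<bar>x i / c\<bar> powr p) = (\<Sum>i<k. \<bar>x i\<bar> powr p) / c powr p"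
    using assms by (simp add: powr_divide sum_divide_distrib)
  then have "vec_pnorm p k (\<lambda>i. x i / c) = ((\<Sum>i<k. \<bar>x i\<bar> powr p) / c powr p) powr (1 / p)"
    unfolding vec_pnorm_def by simp
  also have "\<dots> = (\<Sum>i<k. \<bar>x i\<bar> powr p) powr (1/p) / (c powr p) powr (1/p)" by (rule powr_divide)
  also have "(c powr p) powr (1/p) = c powr (p * (1/p))" by (rule powr_powr)
  finally show ?thesis unfolding vec_pnorm_def using assms by simp
qed

lemma bil_scale: "bil m n (\<lambda>i. c * x i) Z (\<lambda>j. c' * y j) = c * c' * bil m n x Z y"
  unfolding bil_def by (simp add: sum_distrib_left mult_ac)

lemma bil_zero_left: "(\<forall>i<m. x i = 0) \<Longrightarrow> bil m n x Z y = 0"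
  unfolding bil_def by simp

lemma bil_zero_right: "(\<forall>j<n. y j = 0) \<Longrightarrow> bil m n x Z y = 0"
  unfolding bil_def by simp

lemma bil_le_spec:
  assumes p: "p > 0" and mn: "0 < m" "0 < n"
    and x: "vec_pnorm p m x \<le> 1" and y: "vec_pnorm p n y \<le> 1"
  shows "bil m n x Z y \<le> spectral_pnorm p m n Z"
proof -
  have s0: "spectral_pnorm p m n Z \<ge> 0" by (rule spec_nonneg[OF p mn])
  show ?thesis
  proof (cases "vec_pnorm p m x = 0 \<or> vec_pnorm p n y = 0")
    case True
    then have "bil m n x Z y = 0"
      using vp_zero[OF _ p] bil_zero_left bil_zero_right by blast
    then show ?thesis using s0 by simp
  next
    case False
    define c where "c = vec_pnorm p m x"
    define c' where "c' = vec_pnorm p n y"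
    have c: "c > 0" "c \<le> 1" using False vp_nonneg[of p m x] x unfolding c_def by auto
    have c': "c' > 0" "c' \<le> 1" using False vp_nonneg[of p n y] y unfolding c'_def by auto
    have u: "vec_pnorm p m (\<lambda>i. x i / c) = 1" using c vp_div[OF _ p, of c m x] unfolding c_def by simp
    have v: "vec_pnorm p n (\<lambda>j. y j / c') = 1" using c' vp_div[OF _ p, of c' n y] unfolding c'_def by simp
    have "bil m n x Z y = c * c' * bil m n (\<lambda>i. x i / c) Z (\<lambda>j. y j / c')"
      using c c' by (simp add: bil_scale[symmetric])
    also have "\<dots> \<le> c * c' * spectral_pnorm p m n Z"
      using spec_ge[OF p u v] c c' by (intro mult_left_mono) auto
    also have "\<dots> \<le> 1 * spectral_pnorm p m n Z"
      using c c' s0 by (intro mult_right_mono) (auto simp: mult_le_one)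
    finally show ?thesis by simp
  qed
qed

definition GS :: "real set" where
  "GS = {K. \<forall>(m::nat) (n::nat) (d::nat) (a::nat \<Rightarrow> nat \<Rightarrow> real)
        (u::nat \<Rightarrow> nat \<Rightarrow> real) (v::nat \<Rightarrow> nat \<Rightarrow> real).
      (\<forall>i<m. (\<Sum>k<d. (u i k)\<^sup>2) = 1) \<and> (\<forall>j<n. (\<Sum>k<d. (v j k)\<^sup>2) = 1) \<longrightarrow>
      (\<Sum>i<m. \<Sum>j<n. a i j * (\<Sum>k<d. u i k * v j k))
        \<le> K * Sup {(\<Sum>i<m. \<Sum>j<n. a i j * e i * f j) | e f.
                    (\<forall>i<m. e i \<in> {-1, 1}) \<and> (\<forall>j<n. f j \<in> {-1, 1})}}"

lemma groth_GS: "grothendieck_const = Inf GS"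
  unfolding grothendieck_const_def GS_def ..

lemma GS_use:
  assumes "K \<in> GS" "\<forall>i<m. (\<Sum>k<d. (u i k)\<^sup>2) = 1" "\<forall>j<n. (\<Sum>k<d. (v j k)\<^sup>2) = 1"
  shows "(\<Sum>i<m. \<Sum>j<n. a i j * ip d (u i) (v j)) \<le> K * Sup (sgnset m n a)"
  using assms unfolding GS_def sgnset_def ip_def by blast

lemma G_le: "Sup (Gset m n a) \<le> 128 * Sup (sgnset m n a)"
proof -
  have "Sup (Gset m n a) \<le> 64 * Sup (sgnset m n a) + Sup (Gset m n a) / 2"
  proof (rule cSup_least[OF Gset_ne])
    fix v assume "v \<in> Gset m n a"
    then obtain d x y where "v = Gval m n a d x y" "\<forall>i<m. ip d (x i) (x i) \<le> 1" "\<forall>j<n. ip d (y j) (y j) \<le> 1"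
      unfolding Gset_def by blast
    then show "v \<le> 64 * Sup (sgnset m n a) + Sup (Gset m n a) / 2" using key by simp
  qed
  then show ?thesis by simp
qed

lemma GS_128: "128 \<in> GS"
proof -
  have "(\<Sum>i<m. \<Sum>j<n. a i j * ip d (u i) (v j)) \<le> 128 * Sup (sgnset m n a)"
    if "\<forall>i<m. (\<Sum>k<d. (u i k)\<^sup>2) = 1" "\<forall>j<n. (\<Sum>k<d. (v j k)\<^sup>2) = 1" for m n d a u v
  proof -
    have "Gval m n a d u v \<le> Sup (Gset m n a)"
      by (rule Gset_upper) (use that in \<open>auto simp: ip_def power2_eq_square\<close>)
    then show ?thesis using G_le[of m n a] unfolding Gval_def by linarith
  qed
  then show ?thesis unfolding GS_def sgnset_def ip_def by blast
qed

lemma GS_ge1: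
  assumes "K \<in> GS"
  shows "K \<ge> 1"
proof -
  have h: "1 \<le> K * Sup (sgnset 1 1 (\<lambda>_ _. 1))"
    using GS_use[OF assms, where m=1 and n=1 and d=1 and u="\<lambda>_ _. 1" and v="\<lambda>_ _. 1" and a="\<lambda>_ _. 1"]
    by (simp add: ip_def)
  have "Sup (sgnset 1 1 (\<lambda>_ _. 1)) = 1"
  proof (rule antisym)
    show "Sup (sgnset 1 1 (\<lambda>_ _. 1)) \<le> 1"
      by (rule cSup_least[OF sgnset_ne]) (auto simp: sgnset_def)
    have "(1::real) \<in> sgnset 1 1 (\<lambda>_ _. 1)"
      unfolding sgnset_def by (intro CollectI exI[of _ "\<lambda>_. 1::real"]) auto
    then show "1 \<le> Sup (sgnset 1 1 (\<lambda>_ _. 1))" using sgnset_bdd by (rule cSup_upper)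
  qed
  then show ?thesis using h by simp
qed

definition pvobj :: "nat \<Rightarrow> nat \<Rightarrow> (nat \<Rightarrow> nat \<Rightarrow> real) \<Rightarrow> (nat \<Rightarrow> nat \<Rightarrow> real) \<Rightarrow> real" where
  "pvobj m n Z X = (\<Sum>i<m. \<Sum>j<n. Z i j / 2 * X i (m + j)) + (\<Sum>j<n. \<Sum>i<m. Z i j / 2 * X (m + j) i)"

definition pvok :: "real \<Rightarrow> nat \<Rightarrow> nat \<Rightarrow> (nat \<Rightarrow> nat \<Rightarrow> real) \<Rightarrow> bool" where
  "pvok p m n X \<longleftrightarrow> psd (m + n) X \<and>
       (\<Sum>i<m. \<bar>X i i\<bar> powr (p / 2)) \<le> 1 \<and>
       (\<Sum>j<n. \<bar>X (m + j) (m + j)\<bar> powr (p / 2)) \<le> 1"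

lemma pv_Sup: "pv_norm p m n Z = Sup {pvobj m n Z X | X. pvok p m n X}"
  unfolding pv_norm_def pvobj_def pvok_def by simp

definition nrm :: "nat \<Rightarrow> (nat \<Rightarrow> real) \<Rightarrow> real \<Rightarrow> nat \<Rightarrow> real" where
  "nrm N w r = (if r > 0 then (\<lambda>k. w k / r) else (\<lambda>k. if k = 0 then 1 else 0))"

lemma unit_norm:
  assumes N: "0 < N" and q: "q = (\<Sum>k<N. w k * w k)"
  shows "(\<Sum>k<N. (nrm N w (sqrt q) k)\<^sup>2) = 1"
proof (cases "sqrt q > 0")
  case True
  then have q0: "q > 0" by simp
  have "(\<Sum>k<N. (nrm N w (sqrt q) k)\<^sup>2) = (\<Sum>k<N. w k * w k / q)"
    unfolding nrm_def using True q0 by (intro sum.cong refl) (simp add: power_divide power2_eq_square[symmetric])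
  also have "\<dots> = 1" using q q0 by (simp add: sum_divide_distrib[symmetric])
  finally show ?thesis .
next
  case False
  have "(\<Sum>k<N. (nrm N w (sqrt q) k)\<^sup>2) = (\<Sum>k<N. if k = 0 then 1 else 0)"
    unfolding nrm_def using False by (intro sum.cong refl) simp
  also have "\<dots> = 1" using N by simp
  finally show ?thesis .
qed

lemma sumsq_zero:
  assumes "(\<Sum>k<N. w k * w k) = (0::real)" "k < (N::nat)"
  shows "w k = 0"
proof -
  have "(\<Sum>k<N. w k * w k) = 0 \<longleftrightarrow> (\<forall>k\<in>{..<N}. w k * w k = 0)"
    by (rule sum_nonneg_eq_0_iff) auto
  then show ?thesis using assms by simp
qed

lemma pv_elem:
  assumes K: "K \<in> GS" and p: "p > 0" and mn: "0 < m" "0 < n" and X: "pvok p m n X"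
  shows "pvobj m n Z X \<le> K * spectral_pnorm p m n Z"
proof -
  define N where "N = m + n"
  have N0: "0 < N" using mn N_def by simp
  have psdX: "psdon {..<N} X" using X unfolding pvok_def psd_def psdon_def N_def by auto
  obtain u where u: "\<forall>i\<in>{..<N}. \<forall>j\<in>{..<N}. (\<Sum>k\<in>{..<N}. u i k * u j k) = X i j"
    using gram_exists[OF finite_lessThan psdX] by blast
  have uX: "X i j = (\<Sum>k<N. u i k * u j k)" if "i < N" "j < N" for i j using u that by auto
  have sym: "X i j = X j i" if "i < N" "j < N" for i j
  proof -
    have "\<forall>i\<in>{..<N}. \<forall>j\<in>{..<N}. X i j = X j i" using psdX unfolding psdon_def by blast
    then show ?thesis using that by blast
  qed
  define r where "r i = sqrt (X i i)" for i
  define s where "s j = sqrt (X (m + j) (m + j))" for j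
  define uh where "uh i = nrm N (u i) (r i)" for i
  define vh where "vh j = nrm N (u (m + j)) (s j)" for j
  have Xii: "X i i \<ge> 0" if "i < N" for i using uX[OF that that] by (simp add: sum_nonneg)
  have uh1: "\<forall>i<m. (\<Sum>k<N. (uh i k)\<^sup>2) = 1"
  proof (intro allI impI)
    fix i assume "i < m"
    then have "X i i = (\<Sum>k<N. u i k * u i k)" using uX N_def by simp
    then show "(\<Sum>k<N. (uh i k)\<^sup>2) = 1" unfolding uh_def r_def by (rule unit_norm[OF N0])
  qed
  have vh1: "\<forall>j<n. (\<Sum>k<N. (vh j k)\<^sup>2) = 1"
  proof (intro allI impI)
    fix j assume "j < n"
    then have "X (m + j) (m + j) = (\<Sum>k<N. u (m + j) k * u (m + j) k)" using uX N_def by simp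
    then show "(\<Sum>k<N. (vh j k)\<^sup>2) = 1" unfolding vh_def s_def by (rule unit_norm[OF N0])
  qed
  have fac: "X i (m + j) = r i * s j * ip N (uh i) (vh j)" if ij: "i < m" "j < n" for i j
  proof (cases "r i > 0 \<and> s j > 0")
    case True
    have uhe: "uh i = (\<lambda>k. u i k / r i)" using True unfolding uh_def nrm_def by simp
    have vhe: "vh j = (\<lambda>k. u (m + j) k / s j)" using True unfolding vh_def nrm_def by simp
    have "ip N (uh i) (vh j) = (\<Sum>k<N. u i k * u (m + j) k / (r i * s j))"
      unfolding ip_def uhe vhe by (intro sum.cong refl) simp
    also have "\<dots> = (\<Sum>k<N. u i k * u (m + j) k) / (r i * s j)"
      by (rule sum_divide_distrib[symmetric])
    also have "\<dots> = X i (m + j) / (r i * s j)" using uX ij N_def by simp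
    finally show ?thesis using True by simp
  next
    case False
    have "X i (m + j) = 0"
    proof (cases "r i > 0")
      case False
      have iN: "i < N" using ij N_def by simp
      have "X i i \<le> 0" using False unfolding r_def by simp
      then have "X i i = 0" using Xii[OF iN] by linarith
      moreover have "X i i = (\<Sum>k<N. u i k * u i k)" using uX[OF iN iN] .
      ultimately have z: "u i k = 0" if "k < N" for k using sumsq_zero[where N=N and w="u i", OF _ that] by simp
      have "X i (m + j) = (\<Sum>k<N. u i k * u (m + j) k)" using uX ij N_def by simp
      also have "\<dots> = 0" by (rule sum.neutral) (simp add: z)
      finally show ?thesis .
    next
      case True
      then have "\<not> s j > 0" using \<open>\<not> (r i > 0 \<and> s j > 0)\<close> by simp
      have jN: "m + j < N" using ij N_def by simp
      have "X (m + j) (m + j) \<le> 0" using \<open>\<not> s j > 0\<close> unfolding s_def by simp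
      then have "X (m + j) (m + j) = 0" using Xii[OF jN] by linarith
      moreover have "X (m + j) (m + j) = (\<Sum>k<N. u (m + j) k * u (m + j) k)" using uX[OF jN jN] .
      ultimately have z: "u (m + j) k = 0" if "k < N" for k using sumsq_zero[where N=N and w="u (m + j)", OF _ that] by simp
      have "X i (m + j) = (\<Sum>k<N. u i k * u (m + j) k)" using uX ij N_def by simp
      also have "\<dots> = 0" by (rule sum.neutral) (simp add: z)
      finally show ?thesis .
    qed
    moreover have "r i * s j = 0"
    proof -
      have "r i \<ge> 0" unfolding r_def using Xii[of i] ij N_def by simp
      moreover have "s j \<ge> 0" unfolding s_def using Xii[of "m + j"] ij N_def by simp
      ultimately have "r i = 0 \<or> s j = 0" using False by linarith
      then show ?thesis by auto
    qed
    ultimately show ?thesis by simp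
  qed
  define a where "a i j = Z i j * r i * s j" for i j
  have "pvobj m n Z X = (\<Sum>i<m. \<Sum>j<n. Z i j * X i (m + j))"
  proof -
    have "(\<Sum>j<n. \<Sum>i<m. Z i j / 2 * X (m + j) i) = (\<Sum>i<m. \<Sum>j<n. Z i j / 2 * X i (m + j))"
    proof (subst sum.swap, intro sum.cong refl)
      fix i j assume "i \<in> {..<m}" "j \<in> {..<n}"
      then have "X (m + j) i = X i (m + j)" using sym[of "m + j" i] N_def by simp
      then show "Z i j / 2 * X (m + j) i = Z i j / 2 * X i (m + j)" by simp
    qed
    then show ?thesis unfolding pvobj_def by (simp add: sum.distrib[symmetric])
  qed
  also have "\<dots> = (\<Sum>i<m. \<Sum>j<n. a i j * ip N (uh i) (vh j))"
    unfolding a_def by (intro sum.cong refl) (simp add: fac mult_ac)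
  also have "\<dots> \<le> K * Sup (sgnset m n a)"
    by (rule GS_use[OF K uh1 vh1])
  also have "\<dots> \<le> K * spectral_pnorm p m n Z"
  proof (rule mult_left_mono)
    show "0 \<le> K" using GS_ge1[OF K] by simp
    show "Sup (sgnset m n a) \<le> spectral_pnorm p m n Z"
    proof (rule cSup_least[OF sgnset_ne])
      fix v assume "v \<in> sgnset m n a"
      then obtain e f where ef: "v = (\<Sum>i<m. \<Sum>j<n. a i j * e i * f j)" "\<forall>i<m. e i \<in> {-1, 1}" "\<forall>j<n. f j \<in> {-1, 1}"
        unfolding sgnset_def by blast
      have "v = bil m n (\<lambda>i. r i * e i) Z (\<lambda>j. s j * f j)"
        unfolding ef(1) bil_def a_def by (simp add: mult_ac)
      also have "\<dots> \<le> spectral_pnorm p m n Z"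
      proof (rule bil_le_spec[OF p mn])
        have "(\<Sum>i<m. \<bar>r i * e i\<bar> powr p) = (\<Sum>i<m. \<bar>X i i\<bar> powr (p / 2))"
        proof (intro sum.cong refl)
          fix i assume "i \<in> {..<m}"
          then have "\<bar>e i\<bar> = 1" "X i i \<ge> 0" using ef(2) Xii[of i] N_def by auto
          then have "\<bar>r i * e i\<bar> = (X i i) powr (1/2)" unfolding r_def by (simp add: abs_mult powr_half_sqrt)
          then show "\<bar>r i * e i\<bar> powr p = \<bar>X i i\<bar> powr (p / 2)" using \<open>X i i \<ge> 0\<close> by (simp add: powr_powr)
        qed
        also have "\<dots> \<le> 1" using X unfolding pvok_def by simp
        finally have "(\<Sum>i<m. \<bar>r i * e i\<bar> powr p) powr (1/p) \<le> 1 powr (1/p)"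
          using p by (intro powr_mono2) (auto simp: sum_nonneg)
        then show "vec_pnorm p m (\<lambda>i. r i * e i) \<le> 1" unfolding vec_pnorm_def by simp
      next
        have "(\<Sum>j<n. \<bar>s j * f j\<bar> powr p) = (\<Sum>j<n. \<bar>X (m + j) (m + j)\<bar> powr (p / 2))"
        proof (intro sum.cong refl)
          fix j assume "j \<in> {..<n}"
          then have "\<bar>f j\<bar> = 1" "X (m + j) (m + j) \<ge> 0" using ef(3) Xii[of "m + j"] N_def by auto
          then have "\<bar>s j * f j\<bar> = (X (m + j) (m + j)) powr (1/2)" unfolding s_def by (simp add: abs_mult powr_half_sqrt)
          then show "\<bar>s j * f j\<bar> powr p = \<bar>X (m + j) (m + j)\<bar> powr (p / 2)"
            using \<open>X (m + j) (m + j) \<ge> 0\<close> by (simp add: powr_powr)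
        qed
        also have "\<dots> \<le> 1" using X unfolding pvok_def by simp
        finally have "(\<Sum>j<n. \<bar>s j * f j\<bar> powr p) powr (1/p) \<le> 1 powr (1/p)"
          using p by (intro powr_mono2) (auto simp: sum_nonneg)
        then show "vec_pnorm p n (\<lambda>j. s j * f j) \<le> 1" unfolding vec_pnorm_def by simp
      qed
      finally show "v \<le> spectral_pnorm p m n Z" .
    qed
  qed
  finally show ?thesis .
qed

lemma pvset_bdd:
  assumes "p > 0" "0 < m" "0 < n"
  shows "bdd_above {pvobj m n Z X | X. pvok p m n X}"
  unfolding bdd_above_def using pv_elem[OF GS_128 assms] by blast

lemma pvok_zero: "pvok p m n (\<lambda>_ _. 0)"
  unfolding pvok_def psd_def by simp

lemma pvset_ne: "{pvobj m n Z X | X. pvok p m n X} \<noteq> {}"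
  using pvok_zero by blast

lemma pv_le:
  assumes "K \<in> GS" "p > 0" "0 < m" "0 < n"
  shows "pv_norm p m n Z \<le> K * spectral_pnorm p m n Z"
  unfolding pv_Sup by (rule cSup_least[OF pvset_ne]) (use pv_elem[OF assms] in blast)

lemma sq_powr: "(x * x) powr (p / 2) = \<bar>x::real\<bar> powr p"
proof (cases "x = 0")
  case True then show ?thesis by simp
next
  case False
  have "\<bar>x\<bar> powr 2 = \<bar>x\<bar> ^ 2" using False by (simp add: powr_numeral)
  then have e: "x * x = \<bar>x\<bar> powr 2" by (simp add: power2_eq_square)
  have "(x * x) powr (p / 2) = (\<bar>x\<bar> powr 2) powr (p / 2)" by (simp only: e)
  also have "\<dots> = \<bar>x\<bar> powr (2 * (p / 2))" by (rule powr_powr)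
  also have "2 * (p / 2) = p" by simp
  finally show ?thesis .
qed

lemma spec_le_pv:
  assumes p: "p > 0" and mn: "0 < m" "0 < n"
  shows "spectral_pnorm p m n Z \<le> pv_norm p m n Z"
proof (rule spec_le_one[OF mn])
  fix x y assume x: "vec_pnorm p m x = 1" and y: "vec_pnorm p n y = 1"
  define w where "w k = (if k < m then x k else y (k - m))" for k
  define X where "X a b = w a * w b" for a b
  have ok: "pvok p m n X" unfolding pvok_def psd_def
  proof (intro conjI allI impI)
    fix i j show "X i j = X j i" unfolding X_def by simp
  next
    fix z :: "nat \<Rightarrow> real"
    have "(\<Sum>i<m + n. \<Sum>j<m + n. z i * X i j * z j) = (\<Sum>i<m + n. z i * w i) * (\<Sum>j<m + n. z j * w j)"
      unfolding X_def by (simp add: sum_product mult_ac)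
    also have "\<dots> \<ge> 0" by simp
    finally show "(\<Sum>i<m + n. \<Sum>j<m + n. z i * X i j * z j) \<ge> 0" .
  next
    have "(\<Sum>i<m. \<bar>X i i\<bar> powr (p / 2)) = (\<Sum>i<m. \<bar>x i\<bar> powr p)"
      unfolding X_def w_def by (intro sum.cong refl) (simp add: sq_powr)
    also have "\<dots> = 1" by (rule vp_sum1[OF x p])
    finally show "(\<Sum>i<m. \<bar>X i i\<bar> powr (p / 2)) \<le> 1" by simp
  next
    have "(\<Sum>j<n. \<bar>X (m + j) (m + j)\<bar> powr (p / 2)) = (\<Sum>j<n. \<bar>y j\<bar> powr p)"
      unfolding X_def w_def by (intro sum.cong refl) (simp add: sq_powr)
    also have "\<dots> = 1" by (rule vp_sum1[OF y p])
    finally show "(\<Sum>j<n. \<bar>X (m + j) (m + j)\<bar> powr (p / 2)) \<le> 1" by simp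
  qed
  have "pvobj m n Z X = bil m n x Z y"
  proof -
    have "(\<Sum>j<n. \<Sum>i<m. Z i j / 2 * X (m + j) i) = (\<Sum>i<m. \<Sum>j<n. Z i j / 2 * X i (m + j))"
      by (subst sum.swap) (simp add: X_def mult.commute)
    then have "pvobj m n Z X = (\<Sum>i<m. \<Sum>j<n. Z i j * X i (m + j))"
      unfolding pvobj_def by (simp add: sum.distrib[symmetric])
    also have "\<dots> = bil m n x Z y" unfolding bil_def X_def w_def by (intro sum.cong refl) (simp add: mult_ac)
    finally show ?thesis .
  qed
  moreover have "pvobj m n Z X \<le> pv_norm p m n Z"
    unfolding pv_Sup using ok by (intro cSup_upper pvset_bdd[OF p mn]) blast
  ultimately show "bil m n x Z y \<le> pv_norm p m n Z" by simp
qed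

lemma puset_ne:
  assumes p: "p > 0" and mn: "0 < m" "0 < n"
  shows "0 \<in> {mat_inner m n A Z | Z. pv_norm p m n Z \<le> 1}"
proof -
  have "spectral_pnorm p m n (\<lambda>_ _. 0) \<le> 0"
    by (rule spec_le_one[OF mn]) (simp add: bil_def)
  then have "pv_norm p m n (\<lambda>_ _. 0) \<le> 128 * 0"
    using pv_le[OF GS_128 p mn, of "\<lambda>_ _. 0"] by linarith
  then show ?thesis by (intro CollectI exI[of _ "\<lambda>_ _. 0"]) (simp add: mat_inner_def)
qed

lemma puset_le:
  assumes p: "p > 0" and mn: "0 < m" "0 < n" and "v \<in> {mat_inner m n A Z | Z. pv_norm p m n Z \<le> 1}"
  shows "v \<le> nuclear_pnorm p m n A"
proof -
  obtain Z where Z: "v = mat_inner m n A Z" "pv_norm p m n Z \<le> 1" using assms(4) by blast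
  have "spectral_pnorm p m n Z \<le> 1" using spec_le_pv[OF p mn, of Z] Z(2) by linarith
  then show ?thesis using conj2[OF p] Z(1) by simp
qed

lemma puset_bdd:
  assumes p: "p > 0" and mn: "0 < m" "0 < n"
  shows "bdd_above {mat_inner m n A Z | Z. pv_norm p m n Z \<le> 1}"
  unfolding bdd_above_def using puset_le[OF assms] by blast

lemma pu_Sup: "pu_norm p m n A = Sup {mat_inner m n A Z | Z. pv_norm p m n Z \<le> 1}"
  unfolding pu_norm_def ..

theorem lemma3p2:
  fixes A :: "nat \<Rightarrow> nat \<Rightarrow> real" and m n :: nat and p :: real
  assumes "0 < m" and "0 < n" and "p \<in> \<rat>" and "2 < p"
  shows "(\<exists>Z. spectral_pnorm p m n Z \<le> 1 \<and> mat_inner m n A Z = nuclear_pnorm p m n A)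
    \<and> (\<forall>Z. spectral_pnorm p m n Z \<le> 1 \<longrightarrow> mat_inner m n A Z \<le> nuclear_pnorm p m n A)
    \<and> pu_norm p m n A \<le> nuclear_pnorm p m n A
    \<and> nuclear_pnorm p m n A \<le> grothendieck_const * pu_norm p m n A"
proof -
  have p: "p > 0" using assms(4) by simp
  note mn = assms(1,2)
  let ?nu = "nuclear_pnorm p m n A"
  let ?pu = "pu_norm p m n A"
  have c1: "\<exists>Z. spectral_pnorm p m n Z \<le> 1 \<and> mat_inner m n A Z = ?nu" by (rule conj1[OF p mn])
  have c2: "\<forall>Z. spectral_pnorm p m n Z \<le> 1 \<longrightarrow> mat_inner m n A Z \<le> ?nu" using conj2[OF p] by blast
  have c3: "?pu \<le> ?nu"
    unfolding pu_Sup
  proof (rule cSup_least)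
    show "{mat_inner m n A Z | Z. pv_norm p m n Z \<le> 1} \<noteq> {}" using puset_ne[OF p mn, of A] by blast
    fix v assume "v \<in> {mat_inner m n A Z | Z. pv_norm p m n Z \<le> 1}"
    then show "v \<le> ?nu" by (rule puset_le[OF p mn])
  qed
  have pu0: "?pu \<ge> 0"
    unfolding pu_Sup by (rule cSup_upper[OF puset_ne[OF p mn] puset_bdd[OF p mn]])
  obtain Z0 where Z0: "spectral_pnorm p m n Z0 \<le> 1" "mat_inner m n A Z0 = ?nu" using c1 by blast
  have K: "?nu \<le> K * ?pu" if KG: "K \<in> GS" for K
  proof -
    have K1: "K \<ge> 1" by (rule GS_ge1[OF KG])
    define Z' where "Z' i j = Z0 i j / K" for i j
    have "spectral_pnorm p m n Z' \<le> 1 / K"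
    proof (rule spec_le_one[OF mn])
      fix x y assume u: "vec_pnorm p m x = 1" "vec_pnorm p n y = 1"
      have "bil m n x Z' y = bil m n x Z0 y / K"
        unfolding bil_def Z'_def by (simp add: sum_divide_distrib)
      also have "\<dots> \<le> spectral_pnorm p m n Z0 / K"
        using spec_ge[OF p u] K1 by (intro divide_right_mono) auto
      also have "\<dots> \<le> 1 / K" using Z0(1) K1 by (intro divide_right_mono) auto
      finally show "bil m n x Z' y \<le> 1 / K" .
    qed
    then have "pv_norm p m n Z' \<le> K * (1 / K)"
      using pv_le[OF KG p mn, of Z'] K1 by (meson mult_left_mono order_trans less_le_trans zero_less_one less_imp_le)
    then have "pv_norm p m n Z' \<le> 1" using K1 by simp
    then have "mat_inner m n A Z' \<le> ?pu"
      unfolding pu_Sup by (intro cSup_upper puset_bdd[OF p mn]) blast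
    moreover have "mat_inner m n A Z' = ?nu / K"
      unfolding mat_inner_def Z'_def using Z0(2)[unfolded mat_inner_def]
      by (simp add: sum_divide_distrib[symmetric])
    ultimately show ?thesis using K1 by (simp add: divide_le_eq mult.commute)
  qed
  have c4: "?nu \<le> grothendieck_const * ?pu"
  proof (cases "?pu > 0")
    case True
    have "?nu / ?pu \<le> Inf GS"
    proof (rule cInf_greatest)
      show "GS \<noteq> {}" using GS_128 by blast
      fix K assume "K \<in> GS"
      then show "?nu / ?pu \<le> K" using K True by (simp add: divide_le_eq)
    qed
    then show ?thesis unfolding groth_GS using True by (simp add: divide_le_eq)
  next
    case False
    then have "?pu = 0" using pu0 by simp
    then have "?nu \<le> 0" using K[OF GS_128] by simp
    then show ?thesis using \<open>?pu = 0\<close> by simp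
  qed
  show ?thesis using c1 c2 c3 c4 by blast
qed

end
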